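(* Let $\sigma$ be $1$-Lipschitz ($|\sigma(u)-\sigma(u')|\le|u-u'|$ for all $u,u'$) and let $\pi=\mathcal N(0,\rho_1^2\mathbf I_{D_0D_1})\otimes\mathcal N(0,\rho_2^2\mathbf I_{D_1D_2})$ with $\rho_1,\rho_2>0$. Let $\widehat f_n$ be an estimator satisfying the PAC-Bayes bound with prior $\pi$, temperature $\beta>0$ and constant $C_{\mathsf{PB}}>0$. Set $B_\ell=\rho_\ell\sqrt{2D_{\ell-1}D_\ell}$ for $\ell=1,2$. Then $$\Big(C_{\mathsf{PB}}^{-1}\mathbf E_{\mathbf P}\big[\|\widehat f_n-f_{\mathbf P}\|_{\mathbb L_2(\mu)}^2\big]\Big)^{1/2}\le \inf_{\bar w:\ \|\bar w_1\|_F\le B_1,\ \|\bar w_2\|_F\le B_2}\|f_{\bar w}-f_{\mathbf P}\|_{\mathbb L_2(\mu)}+\Big\{\frac{\beta d}{n}\log\Big(3+\frac{nE}{d\beta}\Big)\Big\}^{1/2},$$ where $E=3B_2^2(B_1^2M_2^2+\mu(\mathcal X)M_\sigma^2)$ if $|\sigma(u)|\le M_\sigma$ for all $u$, and $E=3B_1^2B_2^2(M_2^2+\bar M_2^2/D_1)$ if $\sigma$ is unbounded but $\sigma(0)=0$.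
   Context: Let $D_0,D_1,D_2\ge1$, $\mathcal X\subset\mathbb R^{D_0}$ Borel, $\mu$ a $\sigma$-finite measure on $\mathcal X$ with $M_2^2:=D_0^{-1}\int\|x\|_2^2\mu(dx)<\infty$, and $\bar M_2^2:=\|\int xx^\top\mu(dx)\|_{\mathrm{sp}}$. $\mathbb L_2(\mu)$ is the space of $f:\mathcal X\to\mathbb R^{D_2}$ with $\|f\|^2_{\mathbb L_2(\mu)}=\int\|f(x)\|_2^2\mu(dx)<\infty$. Networks: $w=(w_1,w_2)\in\mathsf W=\mathbb R^{D_0\times D_1}\times\mathbb R^{D_1\times D_2}$, $d=D_0D_1+D_1D_2$, $f_w(x)=w_2^\top\bar\sigma(w_1^\top x)$ with $\bar\sigma$ applying $\sigma$ coordinatewise; $\|\cdot\|_F$ is the Frobenius norm. $\mathcal P_1(\mathcal F_{\mathsf W})$ is the set of probability measures $p$ on $\mathsf W$ with $\int\|f_w(x)\|_2p(dw)<\infty$ for all $x$. Data $\mathbf Z^n=(Z_1,\dots,Z_n)$ is drawn from an unknown distribution $\mathbf P$ on $\mathcal Z^n$ ($\mathcal Z$ a measurable space), and $f_{\mathbf P}\in\mathbb L_2(\mu)$ is the target function; $\widehat f_n$ is a measurable function of $\mathbf Z^n$ with values in $\mathbb L_2(\mu)$. It satisfies the PAC-Bayes bound with prior $\pi$, temperature $\beta$ and constant $C_{\mathsf{PB}}$ if $\mathbf E_{\mathbf P}[\|\widehat f_n-f_{\mathbf P}\|^2_{\mathbb L_2(\mu)}]\le C_{\mathsf{PB}}\inf_{p\in\mathcal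 P_1(\mathcal F_{\mathsf W})}\{\int_{\mathsf W}\|f_w-f_{\mathbf P}\|^2_{\mathbb L_2(\mu)}p(dw)+\frac{\beta}{n}D_{\mathrm{KL}}(p\|\pi)\}$. *)

theory Defs
  imports "HOL-Analysis.Analysis" "HOL-Probability.Probability"
begin

text \<open>Two-layer network: weights w = (w1, w2) with w1 a D0 x D1 matrix (rows indexed by 'd0)
  and w2 a D1 x D2 matrix; f_w(x) = w2^T sigma(w1^T x).  Note x v* A = A^T x.\<close>
definition fnet ::
  "(real \<Rightarrow> real) \<Rightarrow> (real^'d1^'d0) \<times> (real^'d2^'d1) \<Rightarrow> real^'d0 \<Rightarrow> real^'d2" where
  "fnet \<sigma> w x = (\<chi> j. \<sigma> ((x v* fst w) $ j)) v* snd w"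

definition L2sq :: "'a measure \<Rightarrow> ('a \<Rightarrow> real^'n) \<Rightarrow> ennreal" where
  "L2sq \<mu> f = (\<integral>\<^sup>+ x. ennreal ((norm (f x))\<^sup>2) \<partial>\<mu>)"

definition L2norm :: "'a measure \<Rightarrow> ('a \<Rightarrow> real^'n) \<Rightarrow> real" where
  "L2norm \<mu> f = sqrt (enn2real (L2sq \<mu> f))"

definition in_L2 :: "'a measure \<Rightarrow> ('a \<Rightarrow> real^'n) \<Rightarrow> bool" where
  "in_L2 \<mu> f \<longleftrightarrow> f \<in> borel_measurable \<mu> \<and> L2sq \<mu> f < \<infinity>"

definition gauss_prior :: "real \<Rightarrow> real \<Rightarrow> ((real^'d1^'d0) \<times> (real^'d2^'d1)) measure" where
  "gauss_prior \<rho>1 \<rho>2 = density lborel (\<lambda>w.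
      ennreal ((\<Prod>i\<in>UNIV. \<Prod>j\<in>UNIV. normal_density 0 \<rho>1 (fst w $ i $ j))
             * (\<Prod>j\<in>UNIV. \<Prod>k\<in>UNIV. normal_density 0 \<rho>2 (snd w $ j $ k))))"

text \<open>KL(p || q) with natural logarithm; finite iff p << q and log(dp/dq) is p-integrable.\<close>
definition KL_finite :: "'a measure \<Rightarrow> 'a measure \<Rightarrow> bool" where
  "KL_finite p q \<longleftrightarrow> absolutely_continuous q p \<and> integrable p (entropy_density (exp 1) q p)"

definition KL :: "'a measure \<Rightarrow> 'a measure \<Rightarrow> real" where
  "KL p q = KL_divergence (exp 1) q p"

definition P1 :: "(real \<Rightarrow> real) \<Rightarrow> (real^'d0) set \<Rightarrow> ((real^'d1^'d0) \<times> (real^'d2^'d1)) measure \<Rightarrow> bool" where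
  "P1 \<sigma> X p \<longleftrightarrow> prob_space p \<and> sets p = sets borel
      \<and> (\<forall>x\<in>X. (\<integral>\<^sup>+ w. ennreal (norm (fnet \<sigma> w x)) \<partial>p) < \<infinity>)"

definition risk :: "'z measure \<Rightarrow> 'a measure \<Rightarrow> ('z \<Rightarrow> 'a \<Rightarrow> real^'n) \<Rightarrow> ('a \<Rightarrow> real^'n) \<Rightarrow> ennreal" where
  "risk P \<mu> fhat fP = (\<integral>\<^sup>+ z. L2sq \<mu> (\<lambda>x. fhat z x - fP x) \<partial>P)"

text \<open>PAC-Bayes bound. The infimum over p is unfolded as a bound for every p;
  p with infinite KL(p||pi) contribute +infinity to the infimum and are omitted.\<close>
definition pac_bayes_bound where
  "pac_bayes_bound P \<mu> X \<sigma> fhat fP \<pi> \<beta> (n::nat) C \<longleftrightarrow>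
     (\<forall>p. P1 \<sigma> X p \<and> KL_finite p \<pi> \<longrightarrow>
        risk P \<mu> fhat fP \<le> ennreal C *
          ((\<integral>\<^sup>+ w. L2sq \<mu> (\<lambda>x. fnet \<sigma> w x - fP x) \<partial>p) + ennreal (\<beta> / real n * KL p \<pi>)))"

definition M2sq :: "(real^'d0) measure \<Rightarrow> real" where
  "M2sq \<mu> = (\<integral>x. (norm x)\<^sup>2 \<partial>\<mu>) / real CARD('d0)"

definition M2barsq :: "(real^'d0) measure \<Rightarrow> real" where
  "M2barsq \<mu> = onorm (\<lambda>v. (\<integral>x. (\<chi> i j. x $ i * x $ j) \<partial>\<mu>) *v v)"

end

theory Submission
  imports Defs
begin

definition gdens :: "'a::euclidean_space \<Rightarrow> real \<Rightarrow> 'a \<Rightarrow> real" where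
  "gdens m s w = (\<Prod>b\<in>Basis. normal_density (m \<bullet> b) s (w \<bullet> b))"

definition GM :: "'a::euclidean_space \<Rightarrow> real \<Rightarrow> 'a measure" where
  "GM m s = density lborel (\<lambda>w. ennreal (gdens m s w))"

lemma gdens_nonneg: "0 \<le> gdens m s w"
  unfolding gdens_def by (simp add: prod_nonneg)

lemma gdens_pos: "0 < s \<Longrightarrow> 0 < gdens m s w"
  unfolding gdens_def by (simp add: prod_pos normal_density_pos)

lemma gdens_meas[measurable]: "gdens m s \<in> borel_measurable borel"
  unfolding gdens_def by measurable

lemma integral_lborel_prod:
  fixes f :: "'a::euclidean_space \<Rightarrow> real \<Rightarrow> real"
  assumes int: "\<And>b. b \<in> Basis \<Longrightarrow> integrable lborel (f b)"
  shows "integrable lborel (\<lambda>x::'a. \<Prod>b\<in>Basis. f b (x \<bullet> b))"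
    and "(\<integral>(x::'a). (\<Prod>b\<in>Basis. f b (x \<bullet> b)) \<partial>lborel) = (\<Prod>b\<in>Basis. (\<integral>x. f b x \<partial>lborel))"
proof -
  interpret product_sigma_finite "\<lambda>_::'a. lborel::real measure" by standard
  have meas: "(\<lambda>x::'a. \<Prod>b\<in>Basis. f b (x \<bullet> b)) \<in> borel_measurable borel"
    using int by (intro borel_measurable_prod) (auto dest: borel_measurable_integrable)
  have mPhi: "(\<lambda>g. \<Sum>b\<in>Basis. g b *\<^sub>R b) \<in> measurable (\<Pi>\<^sub>M b\<in>Basis. lborel) (borel :: 'a measure)"
    by measurable
  have eq: "(\<Prod>b'\<in>Basis. f b' ((\<Sum>b\<in>Basis. g b *\<^sub>R b) \<bullet> b')) = (\<Prod>b\<in>Basis. f b (g b))" for g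
    by (intro prod.cong refl) (simp add: inner_sum_left inner_Basis if_distrib cong: if_cong)
  have "integrable (\<Pi>\<^sub>M b\<in>Basis. lborel) (\<lambda>g. \<Prod>b\<in>Basis. f b (g b))"
    using int by (intro product_integrable_prod) auto
  then show "integrable lborel (\<lambda>x::'a. \<Prod>b\<in>Basis. f b (x \<bullet> b))"
    by (subst lborel_eq) (simp add: integrable_distr_eq[OF mPhi meas[simplified]] eq)
  have "(\<integral>(x::'a). (\<Prod>b\<in>Basis. f b (x \<bullet> b)) \<partial>lborel) = (\<integral>g. (\<Prod>b\<in>Basis. f b (g b)) \<partial>(\<Pi>\<^sub>M b\<in>Basis. lborel))"
    by (subst lborel_eq) (simp add: integral_distr[OF mPhi meas[simplified]] eq)
  also have "\<dots> = (\<Prod>b\<in>Basis. (\<integral>x. f b x \<partial>lborel))"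
    using int by (intro product_integral_prod) auto
  finally show "(\<integral>(x::'a). (\<Prod>b\<in>Basis. f b (x \<bullet> b)) \<partial>lborel) = (\<Prod>b\<in>Basis. (\<integral>x. f b x \<partial>lborel))" .
qed

lemma nd_int1: "0 < s \<Longrightarrow> (\<integral>\<^sup>+x. ennreal (normal_density m s x) \<partial>lborel) = 1"
  by (subst nn_integral_eq_integral) (auto simp: integral_normal_density)

lemma GM_prob: assumes "0 < s" shows "prob_space (GM m s)"
proof
  have "emeasure (GM m s) (space (GM m s)) = (\<integral>\<^sup>+w. ennreal (gdens m s w) \<partial>lborel)"
    unfolding GM_def by (simp add: emeasure_density)
  also have "\<dots> = (\<integral>\<^sup>+w. (\<Prod>b\<in>Basis. ennreal (normal_density (m \<bullet> b) s (w \<bullet> b))) \<partial>lborel)"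
    unfolding gdens_def by (simp add: prod_ennreal)
  also have "\<dots> = (\<Prod>b\<in>Basis. (\<integral>\<^sup>+x. ennreal (normal_density (m \<bullet> b) s x) \<partial>lborel))"
    by (rule nn_integral_lborel_prod) auto
  also have "\<dots> = 1" using assms by (simp add: nd_int1)
  finally show "emeasure (GM m s) (space (GM m s)) = 1" .
qed

lemma sets_GM[simp]: "sets (GM m s) = sets borel"
  by (simp add: GM_def)

lemma space_GM[simp]: "space (GM m s) = UNIV"
  by (simp add: GM_def)

lemma GM_prod:
  fixes H :: "'a::euclidean_space \<Rightarrow> real \<Rightarrow> real"
  assumes s: "0 < s" and int: "\<And>b. b \<in> Basis \<Longrightarrow> integrable lborel (\<lambda>x. normal_density (m \<bullet> b) s x * H b x)"
  shows "integrable (GM m s) (\<lambda>w. \<Prod>b\<in>Basis. H b (w \<bullet> b))"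
    and "(\<integral>w. (\<Prod>b\<in>Basis. H b (w \<bullet> b)) \<partial>GM m s) = (\<Prod>b\<in>Basis. (\<integral>x. normal_density (m \<bullet> b) s x * H b x \<partial>lborel))"
proof -
  have mH: "H b \<in> borel_measurable borel" if "b \<in> Basis" for b
  proof -
    have "(\<lambda>x. normal_density (m \<bullet> b) s x * H b x) \<in> borel_measurable borel"
      using int[OF that] by (auto dest: borel_measurable_integrable)
    then have "(\<lambda>x. (normal_density (m \<bullet> b) s x * H b x) / normal_density (m \<bullet> b) s x) \<in> borel_measurable borel"
      by measurable
    moreover have "(\<lambda>x. (normal_density (m \<bullet> b) s x * H b x) / normal_density (m \<bullet> b) s x) = H b" if "0 < s"
      using normal_density_pos[OF that, of "m \<bullet> b"] by (auto simp: fun_eq_iff) (metis less_irrefl)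
    ultimately show ?thesis using s by metis
  qed
  have m: "(\<lambda>w. \<Prod>b\<in>Basis. H b (w \<bullet> b)) \<in> borel_measurable lborel"
    using mH by (auto intro!: borel_measurable_prod)
  have eq: "gdens m s w *\<^sub>R (\<Prod>b\<in>Basis. H b (w \<bullet> b)) = (\<Prod>b\<in>Basis. normal_density (m \<bullet> b) s (w \<bullet> b) * H b (w \<bullet> b))" for w
    by (simp add: gdens_def prod.distrib)
  have i: "integrable lborel (\<lambda>w. gdens m s w *\<^sub>R (\<Prod>b\<in>Basis. H b (w \<bullet> b)))"
    unfolding eq by (rule integral_lborel_prod(1)[OF int])
  show "integrable (GM m s) (\<lambda>w. \<Prod>b\<in>Basis. H b (w \<bullet> b))"
    unfolding GM_def using m i gdens_nonneg by (subst integrable_density) auto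
  have "(\<integral>w. (\<Prod>b\<in>Basis. H b (w \<bullet> b)) \<partial>GM m s) = (\<integral>w. gdens m s w *\<^sub>R (\<Prod>b\<in>Basis. H b (w \<bullet> b)) \<partial>lborel)"
    unfolding GM_def using m gdens_nonneg by (subst integral_density) auto
  also have "\<dots> = (\<Prod>b\<in>Basis. (\<integral>x. normal_density (m \<bullet> b) s x * H b x \<partial>lborel))"
    unfolding eq by (rule integral_lborel_prod(2)[OF int])
  finally show "(\<integral>w. (\<Prod>b\<in>Basis. H b (w \<bullet> b)) \<partial>GM m s) = (\<Prod>b\<in>Basis. (\<integral>x. normal_density (m \<bullet> b) s x * H b x \<partial>lborel))" .
qed

lemma nd_m0: "0 < s \<Longrightarrow> integrable lborel (\<lambda>x. normal_density m s x * 1) \<and> (\<integral>x. normal_density m s x * 1 \<partial>lborel) = 1"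
  by simp

lemma nd_m1: "0 < s \<Longrightarrow> integrable lborel (\<lambda>x. normal_density m s x * (x - m)) \<and> (\<integral>x. normal_density m s x * (x - m) \<partial>lborel) = 0"
  using integrable_normal_moment[of s m 1] integral_normal_moment_odd[of s m 0] by simp

lemma nd_m2: "0 < s \<Longrightarrow> integrable lborel (\<lambda>x. normal_density m s x * (x - m)\<^sup>2) \<and> (\<integral>x. normal_density m s x * (x - m)\<^sup>2 \<partial>lborel) = s\<^sup>2"
  using integrable_normal_moment[of s m 2] integral_normal_moment_even[of s m 1] by simp

lemma GM_cov:
  fixes m :: "'a::euclidean_space"
  assumes s: "0 < s" and a: "a \<in> Basis" and b: "b \<in> Basis"
  shows "integrable (GM m s) (\<lambda>w. (w \<bullet> a - m \<bullet> a) * (w \<bullet> b - m \<bullet> b))"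
    and "(\<integral>w. (w \<bullet> a - m \<bullet> a) * (w \<bullet> b - m \<bullet> b) \<partial>GM m s) = (if a = b then s\<^sup>2 else 0)"
proof -
  define H where "H c x = (if c = a then x - m \<bullet> a else 1) * (if c = b then x - m \<bullet> b else 1)" for c x
  have eq: "(\<Prod>c\<in>Basis. H c (w \<bullet> c)) = (w \<bullet> a - m \<bullet> a) * (w \<bullet> b - m \<bullet> b)" for w
    unfolding H_def prod.distrib using a b by (simp add: prod.delta)
  have int: "integrable lborel (\<lambda>x. normal_density (m \<bullet> c) s x * H c x)" if "c \<in> Basis" for c
    using nd_m0[OF s, of "m \<bullet> c"] nd_m1[OF s, of "m \<bullet> c"] nd_m2[OF s, of "m \<bullet> c"]
    by (cases "c = a"; cases "c = b") (auto simp: H_def power2_eq_square mult.assoc)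
  show "integrable (GM m s) (\<lambda>w. (w \<bullet> a - m \<bullet> a) * (w \<bullet> b - m \<bullet> b))"
    using GM_prod(1)[OF s int] by (simp add: eq)
  have "(\<integral>w. (w \<bullet> a - m \<bullet> a) * (w \<bullet> b - m \<bullet> b) \<partial>GM m s) = (\<Prod>c\<in>Basis. (\<integral>x. normal_density (m \<bullet> c) s x * H c x \<partial>lborel))"
    using GM_prod(2)[OF s int] by (simp add: eq)
  also have "\<dots> = (\<Prod>c\<in>Basis. (if c = a \<and> c = b then s\<^sup>2 else if c = a \<or> c = b then 0 else 1))"
    using nd_m0[OF s] nd_m1[OF s] nd_m2[OF s]
    by (intro prod.cong refl) (auto simp: H_def power2_eq_square mult.assoc)
  also have "\<dots> = (if a = b then s\<^sup>2 else 0)"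
  proof (cases "a = b")
    case True
    then show ?thesis using a by (simp add: prod.delta cong: if_cong)
  next
    case False
    have "finite (Basis :: 'a set)" by simp
    then show ?thesis using False a by (subst prod_zero) auto
  qed
  finally show "(\<integral>w. (w \<bullet> a - m \<bullet> a) * (w \<bullet> b - m \<bullet> b) \<partial>GM m s) = (if a = b then s\<^sup>2 else 0)" .
qed

lemma GM_lin:
  fixes m :: "'a::euclidean_space"
  assumes s: "0 < s" and a: "a \<in> Basis"
  shows "integrable (GM m s) (\<lambda>w. w \<bullet> a - m \<bullet> a)"
    and "(\<integral>w. w \<bullet> a - m \<bullet> a \<partial>GM m s) = 0"
proof -
  define H where "H c x = (if c = a then x - m \<bullet> a else 1)" for c x
  have eq: "(\<Prod>c\<in>Basis. H c (w \<bullet> c)) = (w \<bullet> a - m \<bullet> a)" for w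
    unfolding H_def using a by (simp add: prod.delta)
  have int: "integrable lborel (\<lambda>x. normal_density (m \<bullet> c) s x * H c x)" if "c \<in> Basis" for c
    using nd_m0[OF s, of "m \<bullet> c"] nd_m1[OF s, of "m \<bullet> c"]
    by (cases "c = a") (auto simp: H_def)
  show "integrable (GM m s) (\<lambda>w. w \<bullet> a - m \<bullet> a)"
    using GM_prod(1)[OF s int] by (simp add: eq)
  have "(\<integral>w. w \<bullet> a - m \<bullet> a \<partial>GM m s) = (\<Prod>c\<in>Basis. (\<integral>x. normal_density (m \<bullet> c) s x * H c x \<partial>lborel))"
    using GM_prod(2)[OF s int] by (simp add: eq)
  also have "\<dots> = (\<Prod>c\<in>Basis. (if c = a then 0 else 1))"
    using nd_m0[OF s] nd_m1[OF s]
    by (intro prod.cong refl) (auto simp: H_def)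
  also have "\<dots> = 0"
    using a by (simp add: prod.delta)
  finally show "(\<integral>w. w \<bullet> a - m \<bullet> a \<partial>GM m s) = 0" .
qed

lemma inner_diff_expand:
  fixes w m c :: "'a::euclidean_space"
  shows "w \<bullet> c - m \<bullet> c = (\<Sum>a\<in>Basis. (c \<bullet> a) * (w \<bullet> a - m \<bullet> a))"
proof -
  have "w \<bullet> c - m \<bullet> c = (w - m) \<bullet> c" by (simp add: inner_diff_left)
  also have "\<dots> = (\<Sum>a\<in>Basis. ((w - m) \<bullet> a) * (c \<bullet> a))" by (rule euclidean_inner)
  finally show ?thesis by (simp add: inner_diff_left mult.commute)
qed

lemma GM_var:
  fixes m c :: "'a::euclidean_space"
  assumes s: "0 < s"
  shows "integrable (GM m s) (\<lambda>w. (w \<bullet> c - m \<bullet> c)\<^sup>2)"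
    and "(\<integral>w. (w \<bullet> c - m \<bullet> c)\<^sup>2 \<partial>GM m s) = s\<^sup>2 * (norm c)\<^sup>2"
proof -
  have eq: "(w \<bullet> c - m \<bullet> c)\<^sup>2 = (\<Sum>a\<in>Basis. \<Sum>b\<in>Basis. ((c \<bullet> a) * (c \<bullet> b)) * ((w \<bullet> a - m \<bullet> a) * (w \<bullet> b - m \<bullet> b)))" for w
  proof -
    have "(w \<bullet> c - m \<bullet> c)\<^sup>2 = (\<Sum>a\<in>Basis. (c \<bullet> a) * (w \<bullet> a - m \<bullet> a)) * (\<Sum>a\<in>Basis. (c \<bullet> a) * (w \<bullet> a - m \<bullet> a))"
      by (simp only: inner_diff_expand[of w c m] power2_eq_square)
    also have "\<dots> = (\<Sum>a\<in>Basis. \<Sum>b\<in>Basis. ((c \<bullet> a) * (w \<bullet> a - m \<bullet> a)) * ((c \<bullet> b) * (w \<bullet> b - m \<bullet> b)))"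
      by (rule sum_product)
    also have "\<dots> = (\<Sum>a\<in>Basis. \<Sum>b\<in>Basis. ((c \<bullet> a) * (c \<bullet> b)) * ((w \<bullet> a - m \<bullet> a) * (w \<bullet> b - m \<bullet> b)))"
      by (intro sum.cong refl) (simp only: ac_simps)
    finally show ?thesis .
  qed
  show "integrable (GM m s) (\<lambda>w. (w \<bullet> c - m \<bullet> c)\<^sup>2)"
    unfolding eq by (auto intro!: integrable_sum integrable_mult_right GM_cov(1)[OF s])
  have "(\<integral>w. (w \<bullet> c - m \<bullet> c)\<^sup>2 \<partial>GM m s) = (\<Sum>a\<in>Basis. \<Sum>b\<in>Basis. ((c \<bullet> a) * (c \<bullet> b)) * (if a = b then s\<^sup>2 else 0))"
  proof -
    have i1: "integrable (GM m s) (\<lambda>w. \<Sum>b\<in>Basis. c \<bullet> a * (c \<bullet> b) * ((w \<bullet> a - m \<bullet> a) * (w \<bullet> b - m \<bullet> b)))" if "a \<in> Basis" for a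
      using that by (auto intro!: integrable_sum integrable_mult_right GM_cov(1)[OF s])
    have i2: "(\<integral>w. (\<Sum>b\<in>Basis. c \<bullet> a * (c \<bullet> b) * ((w \<bullet> a - m \<bullet> a) * (w \<bullet> b - m \<bullet> b))) \<partial>GM m s) =
        (\<Sum>b\<in>Basis. c \<bullet> a * (c \<bullet> b) * (if a = b then s\<^sup>2 else 0))" if a: "a \<in> Basis" for a
    proof -
      have "(\<integral>w. (\<Sum>b\<in>Basis. c \<bullet> a * (c \<bullet> b) * ((w \<bullet> a - m \<bullet> a) * (w \<bullet> b - m \<bullet> b))) \<partial>GM m s) =
        (\<Sum>b\<in>Basis. (\<integral>w. c \<bullet> a * (c \<bullet> b) * ((w \<bullet> a - m \<bullet> a) * (w \<bullet> b - m \<bullet> b)) \<partial>GM m s))"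
        by (rule Bochner_Integration.integral_sum) (use a in \<open>auto intro!: integrable_mult_right GM_cov(1)[OF s]\<close>)
      also have "\<dots> = (\<Sum>b\<in>Basis. c \<bullet> a * (c \<bullet> b) * (if a = b then s\<^sup>2 else 0))"
        by (intro sum.cong refl) (use a in \<open>simp add: GM_cov(2)[OF s] GM_cov(1)[OF s]\<close>)
      finally show ?thesis .
    qed
    show ?thesis unfolding eq
      by (subst Bochner_Integration.integral_sum[OF i1]) (simp_all add: i2)
  qed
  also have "\<dots> = (\<Sum>a\<in>Basis. (c \<bullet> a)\<^sup>2 * s\<^sup>2)"
    by (intro sum.cong refl) (simp add: if_distrib power2_eq_square sum.delta cong: if_cong)
  also have "\<dots> = s\<^sup>2 * (c \<bullet> c)"
    by (subst euclidean_inner[of c c]) (simp add: sum_distrib_left power2_eq_square mult.commute)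
  finally show "(\<integral>w. (w \<bullet> c - m \<bullet> c)\<^sup>2 \<partial>GM m s) = s\<^sup>2 * (norm c)\<^sup>2"
    by (simp add: power2_norm_eq_inner)
qed

lemma GM_mean:
  fixes m c :: "'a::euclidean_space"
  assumes s: "0 < s"
  shows "integrable (GM m s) (\<lambda>w. w \<bullet> c - m \<bullet> c)"
    and "(\<integral>w. w \<bullet> c - m \<bullet> c \<partial>GM m s) = 0"
proof -
  have eq: "(\<lambda>w. w \<bullet> c - m \<bullet> c) = (\<lambda>w. \<Sum>a\<in>Basis. (c \<bullet> a) * (w \<bullet> a - m \<bullet> a))"
    by (rule ext) (rule inner_diff_expand)
  show "integrable (GM m s) (\<lambda>w. w \<bullet> c - m \<bullet> c)"
    unfolding eq by (auto intro!: integrable_sum integrable_mult_right GM_lin(1)[OF s])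
  show "(\<integral>w. w \<bullet> c - m \<bullet> c \<partial>GM m s) = 0"
    unfolding eq by (subst Bochner_Integration.integral_sum) (auto intro!: integrable_mult_right GM_lin(1)[OF s] sum.neutral simp: GM_lin(2)[OF s])
qed

lemma GM_sq:
  fixes m c :: "'a::euclidean_space"
  assumes s: "0 < s"
  shows "integrable (GM m s) (\<lambda>w. (w \<bullet> c)\<^sup>2)"
    and "(\<integral>w. (w \<bullet> c)\<^sup>2 \<partial>GM m s) = (m \<bullet> c)\<^sup>2 + s\<^sup>2 * (norm c)\<^sup>2"
proof -
  interpret prob_space "GM m s" by (rule GM_prob[OF s])
  have eq: "(\<lambda>w. (w \<bullet> c)\<^sup>2) = (\<lambda>w. (w \<bullet> c - m \<bullet> c)\<^sup>2 + 2 * (m \<bullet> c) * (w \<bullet> c - m \<bullet> c) + (m \<bullet> c)\<^sup>2)"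
    by (rule ext) (simp add: power2_eq_square algebra_simps)
  show "integrable (GM m s) (\<lambda>w. (w \<bullet> c)\<^sup>2)"
    unfolding eq by (intro Bochner_Integration.integrable_add integrable_mult_right GM_var(1)[OF s] GM_mean(1)[OF s] integrable_const)
  show "(\<integral>w. (w \<bullet> c)\<^sup>2 \<partial>GM m s) = (m \<bullet> c)\<^sup>2 + s\<^sup>2 * (norm c)\<^sup>2"
  proof -
    have i1: "integrable (GM m s) (\<lambda>w. (w \<bullet> c - m \<bullet> c)\<^sup>2 + 2 * (m \<bullet> c) * (w \<bullet> c - m \<bullet> c))"
      by (intro Bochner_Integration.integrable_add integrable_mult_right GM_var(1)[OF s] GM_mean(1)[OF s])
    have pu: "prob UNIV = 1" using prob_space by simp
    show ?thesis unfolding eq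
      apply (subst Bochner_Integration.integral_add[OF i1 integrable_const])
      apply (subst Bochner_Integration.integral_add[OF GM_var(1)[OF s]])
      apply (rule integrable_mult_right, rule GM_mean(1)[OF s])
      apply (simp add: GM_var(2)[OF s] GM_mean(2)[OF s] GM_mean(1)[OF s] pu)
      done
  qed
qed

lemma norm_sq_vec: "(norm (v :: real^'n))\<^sup>2 = (\<Sum>k\<in>UNIV. (v $ k)\<^sup>2)"
  unfolding power2_norm_eq_inner inner_vec_def by (simp add: power2_eq_square)

lemma Basis_mat: "(Basis :: (real^'n^'m) set) = (\<lambda>(i,j). axis i (axis j (1::real))) ` UNIV"
  by (auto simp: Basis_vec_def image_iff)

lemma inj_Basis_mat: "inj (\<lambda>(i,j). (axis i (axis j (1::real)) :: real^'n^'m))"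
  by (auto simp: inj_def axis_eq_axis)

lemma inner_axis_mat: "(w :: real^'n^'m) \<bullet> axis i (axis j 1) = w $ i $ j"
  by (simp add: inner_axis)

lemma prod_Basis_mat:
  "(\<Prod>b\<in>(Basis :: (real^'n^'m) set). F b) = (\<Prod>i\<in>UNIV. \<Prod>j\<in>UNIV. F (axis i (axis j 1)))"
  unfolding Basis_mat
  unfolding prod.reindex[OF inj_Basis_mat] prod.cartesian_product UNIV_Times_UNIV by (simp add: split_beta comp_def)

lemma sum_Basis_mat:
  "(\<Sum>b\<in>(Basis :: (real^'n^'m) set). F b) = (\<Sum>i\<in>UNIV. \<Sum>j\<in>UNIV. F (axis i (axis j 1)))"
  unfolding Basis_mat
  unfolding sum.reindex[OF inj_Basis_mat] sum.cartesian_product UNIV_Times_UNIV by (simp add: split_beta comp_def)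

lemma gdens_mat: "gdens (m :: real^'n^'m) s w = (\<Prod>i\<in>UNIV. \<Prod>j\<in>UNIV. normal_density (m $ i $ j) s (w $ i $ j))"
  unfolding gdens_def prod_Basis_mat inner_axis_mat ..

definition colv :: "real^'m \<Rightarrow> 'n \<Rightarrow> real^'n^'m" where
  "colv y k = (\<chi> i. y $ i *\<^sub>R axis k 1)"

lemma vm_inner: "(y v* w) $ k = w \<bullet> colv y k"
  unfolding colv_def inner_vec_def[of w] vector_matrix_mult_def by (simp add: inner_axis mult.commute)

lemma norm_colv: "(norm (colv y k))\<^sup>2 = (norm y)\<^sup>2"
proof -
  have "(norm (colv y k))\<^sup>2 = (\<Sum>i\<in>UNIV. (y $ i *\<^sub>R axis k (1::real)) \<bullet> (y $ i *\<^sub>R axis k 1))"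
    by (simp only: power2_norm_eq_inner inner_vec_def[of "colv y k" "colv y k"]) (simp add: colv_def)
  also have "\<dots> = (\<Sum>i\<in>UNIV. (y $ i)\<^sup>2)"
    by (simp add: inner_axis_axis power2_eq_square)
  finally show ?thesis by (simp add: norm_sq_vec)
qed

lemma GM_vm_centered:
  fixes m :: "real^'n^'m" and y :: "real^'m"
  assumes s: "0 < s"
  shows "integrable (GM m s) (\<lambda>w. (norm (y v* w - y v* m))\<^sup>2)"
    and "(\<integral>w. (norm (y v* w - y v* m))\<^sup>2 \<partial>GM m s) = s\<^sup>2 * real CARD('n) * (norm y)\<^sup>2"
proof -
  have eq: "(norm (y v* w - y v* m))\<^sup>2 = (\<Sum>k\<in>UNIV. (w \<bullet> colv y k - m \<bullet> colv y k)\<^sup>2)" for w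
    by (simp add: norm_sq_vec vm_inner)
  show "integrable (GM m s) (\<lambda>w. (norm (y v* w - y v* m))\<^sup>2)"
    unfolding eq by (auto intro!: integrable_sum GM_var(1)[OF s])
  have "(\<integral>w. (norm (y v* w - y v* m))\<^sup>2 \<partial>GM m s) = (\<Sum>k\<in>(UNIV::'n set). s\<^sup>2 * (norm y)\<^sup>2)"
    unfolding eq
    by (subst Bochner_Integration.integral_sum) (auto intro!: GM_var(1)[OF s] simp: GM_var(2)[OF s] norm_colv)
  then show "(\<integral>w. (norm (y v* w - y v* m))\<^sup>2 \<partial>GM m s) = s\<^sup>2 * real CARD('n) * (norm y)\<^sup>2"
    by simp
qed

lemma GM_vm_sq:
  fixes m :: "real^'n^'m" and y :: "real^'m"
  assumes s: "0 < s"
  shows "integrable (GM m s) (\<lambda>w. (norm (y v* w))\<^sup>2)"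
    and "(\<integral>w. (norm (y v* w))\<^sup>2 \<partial>GM m s) = (norm (y v* m))\<^sup>2 + s\<^sup>2 * real CARD('n) * (norm y)\<^sup>2"
proof -
  have eq: "(norm (y v* w))\<^sup>2 = (\<Sum>k\<in>UNIV. (w \<bullet> colv y k)\<^sup>2)" for w
    by (simp add: norm_sq_vec vm_inner)
  have eqm: "(norm (y v* m))\<^sup>2 = (\<Sum>k\<in>UNIV. (m \<bullet> colv y k)\<^sup>2)"
    by (simp add: norm_sq_vec vm_inner)
  show "integrable (GM m s) (\<lambda>w. (norm (y v* w))\<^sup>2)"
    unfolding eq by (auto intro!: integrable_sum GM_sq(1)[OF s])
  have "(\<integral>w. (norm (y v* w))\<^sup>2 \<partial>GM m s) = (\<Sum>k\<in>UNIV. (m \<bullet> colv y k)\<^sup>2 + s\<^sup>2 * (norm y)\<^sup>2)"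
    unfolding eq
    by (subst Bochner_Integration.integral_sum) (auto intro!: GM_sq(1)[OF s] simp: GM_sq(2)[OF s] norm_colv)
  then show "(\<integral>w. (norm (y v* w))\<^sup>2 \<partial>GM m s) = (norm (y v* m))\<^sup>2 + s\<^sup>2 * real CARD('n) * (norm y)\<^sup>2"
    by (simp add: eqm sum.distrib)
qed

lemma GM_norm_sq:
  fixes m :: "'a::euclidean_space"
  assumes s: "0 < s"
  shows "integrable (GM m s) (\<lambda>w. (norm w)\<^sup>2)"
    and "(\<integral>w. (norm w)\<^sup>2 \<partial>GM m s) = (norm m)\<^sup>2 + s\<^sup>2 * real DIM('a)"
proof -
  have eq: "(norm w)\<^sup>2 = (\<Sum>b\<in>Basis. (w \<bullet> b)\<^sup>2)" for w :: 'a
    unfolding power2_norm_eq_inner by (subst euclidean_inner) (simp add: power2_eq_square)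
  show "integrable (GM m s) (\<lambda>w. (norm w)\<^sup>2)"
    unfolding eq by (auto intro!: integrable_sum GM_sq(1)[OF s])
  have "(\<integral>w. (norm w)\<^sup>2 \<partial>GM m s) = (\<Sum>b\<in>Basis. (m \<bullet> b)\<^sup>2 + s\<^sup>2)"
    unfolding eq
    by (subst Bochner_Integration.integral_sum) (auto intro!: GM_sq(1)[OF s] simp: GM_sq(2)[OF s])
  then show "(\<integral>w. (norm w)\<^sup>2 \<partial>GM m s) = (norm m)\<^sup>2 + s\<^sup>2 * real DIM('a)"
    by (simp add: sum.distrib eq[of m] mult.commute)
qed

lemma KL_dens:
  fixes g h :: "'a::euclidean_space \<Rightarrow> real"
  assumes gm[measurable]: "g \<in> borel_measurable borel" and g0: "\<And>w. 0 \<le> g w"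
    and hm[measurable]: "h \<in> borel_measurable borel" and h0: "\<And>w. 0 < h w"
    and sf: "sigma_finite_measure (density lborel h)"
    and int: "integrable (density lborel g) (\<lambda>w. ln (g w / h w))"
  shows "absolutely_continuous (density lborel h) (density lborel g)"
    and "integrable (density lborel g) (entropy_density (exp 1) (density lborel h) (density lborel g))"
    and "KL_divergence (exp 1) (density lborel h) (density lborel g) = (\<integral>w. ln (g w / h w) \<partial>density lborel g)"
proof -
  define q where "q = density lborel (\<lambda>w. ennreal (h w))"
  define r where "r w = g w / h w" for w
  have rm[measurable]: "r \<in> borel_measurable borel" unfolding r_def by measurable
  have r0: "0 \<le> r w" for w unfolding r_def using g0 h0 by (simp add: less_imp_le)
  have peq: "density lborel (\<lambda>w. ennreal (g w)) = density q (\<lambda>w. ennreal (r w))"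
    unfolding q_def r_def
    by (rule density_density_divide[symmetric]) (use g0 h0 in \<open>auto simp: less_imp_le intro!: AE_I2 simp: h0[THEN less_imp_neq, symmetric]\<close>)
  interpret q: sigma_finite_measure q using sf unfolding q_def .
  have sq[simp]: "sets q = sets borel" "space q = UNIV" unfolding q_def by auto
  have rq[measurable]: "r \<in> borel_measurable q"
    by (subst measurable_cong_sets[OF sq(1) refl]) (rule rm)
  have lq[measurable]: "(\<lambda>w. ln (g w / h w)) \<in> borel_measurable q"
    by (subst measurable_cong_sets[OF sq(1) refl]) measurable
  have ac: "absolutely_continuous q (density q (\<lambda>w. ennreal (r w)))"
    by (rule absolutely_continuousI_density) simp
  have "AE w in q. RN_deriv q (density q (\<lambda>w. ennreal (r w))) w = ennreal (r w)"
    by (rule q.density_unique) (auto simp: density_RN_deriv_density)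
  then have "AE w in q. entropy_density (exp 1) q (density q (\<lambda>w. ennreal (r w))) w = ln (r w)"
    by eventually_elim (simp add: entropy_density_def r0 log_def)
  then have ae: "AE w in density q (\<lambda>w. ennreal (r w)). entropy_density (exp 1) q (density q (\<lambda>w. ennreal (r w))) w = ln (r w)"
    by (rule absolutely_continuous_AE[OF _ ac, rotated]) simp
  show "absolutely_continuous (density lborel h) (density lborel g)"
    using ac unfolding peq q_def .
  show "integrable (density lborel g) (entropy_density (exp 1) (density lborel h) (density lborel g))"
    unfolding peq q_def[symmetric]
    by (rule integrable_cong_AE[THEN iffD2, OF _ _ ae]) (use int in \<open>simp_all add: peq r_def\<close>)
  show "KL_divergence (exp 1) (density lborel h) (density lborel g) = (\<integral>w. ln (g w / h w) \<partial>density lborel g)"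
    unfolding peq q_def[symmetric] KL_divergence_def
    by (rule integral_cong_AE) (use ae in \<open>simp_all add: r_def\<close>)
qed

lemma distr_pair_snd':
  assumes "prob_space M1" "prob_space M2"
  shows "distr (M1 \<Otimes>\<^sub>M M2) M2 snd = M2"
proof (intro measure_eqI)
  interpret M1: prob_space M1 by fact
  interpret M2: prob_space M2 by fact
  interpret pair_sigma_finite M1 M2 ..
  fix A assume A: "A \<in> sets (distr (M1 \<Otimes>\<^sub>M M2) M2 snd)"
  from A have "emeasure (distr (M1 \<Otimes>\<^sub>M M2) M2 snd) A = emeasure (M1 \<Otimes>\<^sub>M M2) (space M1 \<times> A)"
    by (auto simp add: emeasure_distr space_pair_measure dest: sets.sets_into_space intro!: arg_cong2[where f=emeasure])
  moreover have "A \<in> sets M2" using A by simp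
  moreover then have "emeasure (M1 \<Otimes>\<^sub>M M2) (space M1 \<times> A) = emeasure M1 (space M1) * emeasure M2 A"
    by (intro M2.emeasure_pair_measure_Times) auto
  ultimately show "emeasure (distr (M1 \<Otimes>\<^sub>M M2) M2 snd) A = emeasure M2 A"
    by (simp add: M1.emeasure_space_1)
qed simp

lemma pair_fst_int:
  fixes f :: "'a \<Rightarrow> real"
  assumes "prob_space M1" "prob_space M2" and f[measurable]: "f \<in> borel_measurable M1"
  shows "integrable (M1 \<Otimes>\<^sub>M M2) (\<lambda>w. f (fst w)) \<longleftrightarrow> integrable M1 f"
    and "(\<integral>w. f (fst w) \<partial>(M1 \<Otimes>\<^sub>M M2)) = integral\<^sup>L M1 f"
proof -
  interpret M2: prob_space M2 by fact
  have d: "distr (M1 \<Otimes>\<^sub>M M2) M1 fst = M1" by (rule M2.distr_pair_fst)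
  show "integrable (M1 \<Otimes>\<^sub>M M2) (\<lambda>w. f (fst w)) \<longleftrightarrow> integrable M1 f"
    using integrable_distr_eq[of fst "M1 \<Otimes>\<^sub>M M2" M1 f] d by simp
  show "(\<integral>w. f (fst w) \<partial>(M1 \<Otimes>\<^sub>M M2)) = integral\<^sup>L M1 f"
    using integral_distr[of fst "M1 \<Otimes>\<^sub>M M2" M1 f] d by simp
qed

lemma pair_snd_int:
  fixes f :: "'a \<Rightarrow> real"
  assumes "prob_space M1" "prob_space M2" and f[measurable]: "f \<in> borel_measurable M2"
  shows "integrable (M1 \<Otimes>\<^sub>M M2) (\<lambda>w. f (snd w)) \<longleftrightarrow> integrable M2 f"
    and "(\<integral>w. f (snd w) \<partial>(M1 \<Otimes>\<^sub>M M2)) = integral\<^sup>L M2 f"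
proof -
  have d: "distr (M1 \<Otimes>\<^sub>M M2) M2 snd = M2" by (rule distr_pair_snd'[OF assms(1,2)])
  show "integrable (M1 \<Otimes>\<^sub>M M2) (\<lambda>w. f (snd w)) \<longleftrightarrow> integrable M2 f"
    using integrable_distr_eq[of snd "M1 \<Otimes>\<^sub>M M2" M2 f] d by simp
  show "(\<integral>w. f (snd w) \<partial>(M1 \<Otimes>\<^sub>M M2)) = integral\<^sup>L M2 f"
    using integral_distr[of snd "M1 \<Otimes>\<^sub>M M2" M2 f] d by simp
qed

lemma pair_GM:
  assumes "0 < s1" "0 < s2"
  shows "GM (m1::'a::euclidean_space) s1 \<Otimes>\<^sub>M GM (m2::'b::euclidean_space) s2
     = density lborel (\<lambda>w. ennreal (gdens m1 s1 (fst w) * gdens m2 s2 (snd w)))"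
proof -
  interpret p2: prob_space "GM m2 s2" by (rule GM_prob) fact
  have "GM m1 s1 \<Otimes>\<^sub>M GM m2 s2 = density (lborel \<Otimes>\<^sub>M lborel) (\<lambda>(x,y). ennreal (gdens m1 s1 x) * ennreal (gdens m2 s2 y))"
    unfolding GM_def
    by (rule pair_measure_density) (use p2.sigma_finite_measure_axioms sigma_finite_lborel in \<open>auto simp: GM_def\<close>)
  also have "\<dots> = density lborel (\<lambda>w. ennreal (gdens m1 s1 (fst w) * gdens m2 s2 (snd w)))"
    by (subst lborel_prod, rule arg_cong[where f = "density lborel"]) (auto simp: fun_eq_iff ennreal_mult gdens_nonneg)
  finally show ?thesis .
qed

lemma ln_nd_ratio:
  assumes "0 < s" "0 < r"
  shows "ln (normal_density m s x / normal_density 0 r x) = ln (r / s) - (x - m)\<^sup>2 / (2 * s\<^sup>2) + x\<^sup>2 / (2 * r\<^sup>2)"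
proof -
  have sq: "sqrt (2 * pi * t\<^sup>2) = sqrt (2 * pi) * t" if "0 < t" for t
    using that by (simp add: real_sqrt_mult)
  have "normal_density m s x / normal_density 0 r x
      = (sqrt (2 * pi) * r) / (sqrt (2 * pi) * s) * (exp (-(x - m)\<^sup>2 / (2 * s\<^sup>2)) / exp (-(x - 0)\<^sup>2 / (2 * r\<^sup>2)))"
    unfolding normal_density_def sq[OF assms(1)] sq[OF assms(2)] by simp
  also have "\<dots> = (r / s) * exp (- (x - m)\<^sup>2 / (2 * s\<^sup>2) + x\<^sup>2 / (2 * r\<^sup>2))"
    by (simp add: exp_diff[symmetric])
  finally have "normal_density m s x / normal_density 0 r x
      = (r / s) * exp (- (x - m)\<^sup>2 / (2 * s\<^sup>2) + x\<^sup>2 / (2 * r\<^sup>2))" .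
  moreover have "ln ((r / s) * exp (- (x - m)\<^sup>2 / (2 * s\<^sup>2) + x\<^sup>2 / (2 * r\<^sup>2))) = ln (r / s) + (- (x - m)\<^sup>2 / (2 * s\<^sup>2) + x\<^sup>2 / (2 * r\<^sup>2))"
    using assms by (subst ln_mult) auto
  ultimately show ?thesis by simp
qed

lemma ln_gdens_ratio:
  fixes m w :: "'a::euclidean_space"
  assumes s: "0 < s" and r: "0 < r"
  shows "ln (gdens m s w / gdens 0 r w) = (\<Sum>b\<in>Basis. ln (r / s) - (w \<bullet> b - m \<bullet> b)\<^sup>2 / (2 * s\<^sup>2) + (w \<bullet> b)\<^sup>2 / (2 * r\<^sup>2))"
proof -
  have eq1: "gdens m s w / gdens 0 r w = (\<Prod>b\<in>Basis. normal_density (m \<bullet> b) s (w \<bullet> b) / normal_density 0 r (w \<bullet> b))"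
    unfolding gdens_def by (simp add: prod_dividef)
  have "ln (gdens m s w / gdens 0 r w) = (\<Sum>b\<in>Basis. ln (normal_density (m \<bullet> b) s (w \<bullet> b) / normal_density 0 r (w \<bullet> b)))"
    unfolding eq1 using s r by (subst ln_prod) (auto intro!: divide_pos_pos normal_density_pos simp: normal_density_pos[OF s, THEN less_imp_neq, symmetric] normal_density_pos[OF r, THEN less_imp_neq, symmetric])
  then show ?thesis using s r by (simp add: ln_nd_ratio)
qed

lemma GM_KL_layer:
  fixes m :: "'a::euclidean_space"
  assumes s: "0 < s" and r: "0 < r"
  shows "integrable (GM m s) (\<lambda>w. ln (gdens m s w / gdens 0 r w))"
    and "(\<integral>w. ln (gdens m s w / gdens 0 r w) \<partial>GM m s)
        = real DIM('a) * (ln (r / s) - 1/2 + s\<^sup>2 / (2 * r\<^sup>2)) + (norm m)\<^sup>2 / (2 * r\<^sup>2)"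
proof -
  interpret prob_space "GM m s" by (rule GM_prob[OF s])
  have pu: "prob UNIV = 1" using prob_space by simp
  have eq: "(\<lambda>w. ln (gdens m s w / gdens 0 r w)) = (\<lambda>w. \<Sum>b\<in>Basis. ln (r / s) - (w \<bullet> b - m \<bullet> b)\<^sup>2 / (2 * s\<^sup>2) + (w \<bullet> b)\<^sup>2 / (2 * r\<^sup>2))"
    using ln_gdens_ratio[OF s r] by auto
  have ib: "integrable (GM m s) (\<lambda>w. ln (r / s) - (w \<bullet> b - m \<bullet> b)\<^sup>2 / (2 * s\<^sup>2) + (w \<bullet> b)\<^sup>2 / (2 * r\<^sup>2))" for b
    by (intro Bochner_Integration.integrable_add Bochner_Integration.integrable_diff integrable_const
        integrable_divide_zero GM_var(1)[OF s] GM_sq(1)[OF s])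
  show "integrable (GM m s) (\<lambda>w. ln (gdens m s w / gdens 0 r w))"
    unfolding eq by (rule Bochner_Integration.integrable_sum, rule ib)
  have ib2: "(\<integral>w. ln (r / s) - (w \<bullet> b - m \<bullet> b)\<^sup>2 / (2 * s\<^sup>2) + (w \<bullet> b)\<^sup>2 / (2 * r\<^sup>2) \<partial>GM m s)
      = ln (r / s) - 1/2 + ((m \<bullet> b)\<^sup>2 + s\<^sup>2) / (2 * r\<^sup>2)" if b: "b \<in> Basis" for b
  proof -
    have nb: "norm b = 1" using b by simp
    have "(\<integral>w. ln (r / s) - (w \<bullet> b - m \<bullet> b)\<^sup>2 / (2 * s\<^sup>2) + (w \<bullet> b)\<^sup>2 / (2 * r\<^sup>2) \<partial>GM m s)
       = ln (r / s) - (\<integral>w. (w \<bullet> b - m \<bullet> b)\<^sup>2 \<partial>GM m s) / (2 * s\<^sup>2) + (\<integral>w. (w \<bullet> b)\<^sup>2 \<partial>GM m s) / (2 * r\<^sup>2)"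
      apply (subst Bochner_Integration.integral_add)
        apply (intro Bochner_Integration.integrable_diff integrable_const integrable_divide_zero GM_var(1)[OF s])
       apply (intro integrable_divide_zero GM_sq(1)[OF s])
      apply (subst Bochner_Integration.integral_diff)
        apply (intro integrable_const)
       apply (intro integrable_divide_zero GM_var(1)[OF s])
      apply (simp add: pu)
      done
    also have "\<dots> = ln (r / s) - 1/2 + ((m \<bullet> b)\<^sup>2 + s\<^sup>2) / (2 * r\<^sup>2)"
      using s by (simp add: GM_var(2)[OF s] GM_sq(2)[OF s] nb)
    finally show ?thesis .
  qed
  have "(\<integral>w. ln (gdens m s w / gdens 0 r w) \<partial>GM m s) = (\<Sum>b\<in>Basis. ln (r / s) - 1/2 + ((m \<bullet> b)\<^sup>2 + s\<^sup>2) / (2 * r\<^sup>2))"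
    unfolding eq by (subst Bochner_Integration.integral_sum) (auto intro: ib simp: ib2)
  also have "\<dots> = real DIM('a) * (ln (r / s) - 1/2 + s\<^sup>2 / (2 * r\<^sup>2)) + (\<Sum>b\<in>Basis. (m \<bullet> b)\<^sup>2) / (2 * r\<^sup>2)"
  proof -
    have "(\<Sum>b\<in>Basis. ln (r / s) - 1/2 + ((m \<bullet> b)\<^sup>2 + s\<^sup>2) / (2 * r\<^sup>2))
        = (\<Sum>b\<in>(Basis::'a set). (ln (r / s) - 1/2 + s\<^sup>2 / (2 * r\<^sup>2)) + (m \<bullet> b)\<^sup>2 / (2 * r\<^sup>2))"
      by (intro sum.cong refl) (simp add: add_divide_distrib)
    also have "\<dots> = real DIM('a) * (ln (r / s) - 1/2 + s\<^sup>2 / (2 * r\<^sup>2)) + (\<Sum>b\<in>Basis. (m \<bullet> b)\<^sup>2) / (2 * r\<^sup>2)"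
      by (simp only: sum.distrib sum_constant sum_divide_distrib) (simp add: distrib_left)
    finally show ?thesis .
  qed
  also have "(\<Sum>b\<in>Basis. (m \<bullet> b)\<^sup>2) = (norm m)\<^sup>2"
    unfolding power2_norm_eq_inner by (subst euclidean_inner[of m m]) (simp add: power2_eq_square)
  finally show "(\<integral>w. ln (gdens m s w / gdens 0 r w) \<partial>GM m s)
        = real DIM('a) * (ln (r / s) - 1/2 + s\<^sup>2 / (2 * r\<^sup>2)) + (norm m)\<^sup>2 / (2 * r\<^sup>2)" .
qed

lemma prob_pair_GM:
  assumes "0 < s1" "0 < s2"
  shows "prob_space (GM (m1::'a::euclidean_space) s1 \<Otimes>\<^sub>M GM (m2::'b::euclidean_space) s2)"
proof -
  interpret a: prob_space "GM m1 s1" by (rule GM_prob) fact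
  interpret b: prob_space "GM m2 s2" by (rule GM_prob) fact
  interpret pair_prob_space "GM m1 s1" "GM m2 s2" ..
  show ?thesis by (rule P.prob_space_axioms)
qed

definition KLl :: "'a::euclidean_space \<Rightarrow> real \<Rightarrow> real \<Rightarrow> real" where
  "KLl m s r = real DIM('a) * (ln (r / s) - 1/2 + s\<^sup>2 / (2 * r\<^sup>2)) + (norm m)\<^sup>2 / (2 * r\<^sup>2)"

lemma KL_post:
  fixes m1 :: "'a::euclidean_space" and m2 :: "'b::euclidean_space"
  assumes s1: "0 < s1" and s2: "0 < s2" and r1: "0 < r1" and r2: "0 < r2"
  defines "p \<equiv> GM m1 s1 \<Otimes>\<^sub>M GM m2 s2"
    and "q \<equiv> density lborel (\<lambda>w. ennreal (gdens 0 r1 (fst w) * gdens 0 r2 (snd w)))"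
  shows "absolutely_continuous q p"
    and "integrable p (entropy_density (exp 1) q p)"
    and "KL_divergence (exp 1) q p = KLl m1 s1 r1 + KLl m2 s2 r2"
proof -
  define g where "g w = gdens m1 s1 (fst w) * gdens m2 s2 (snd w)" for w :: "'a \<times> 'b"
  define h where "h w = gdens 0 r1 (fst w) * gdens 0 r2 (snd w)" for w :: "'a \<times> 'b"
  have pg: "p = density lborel g" unfolding p_def g_def by (rule pair_GM[OF s1 s2])
  have qh: "q = density lborel h" unfolding q_def h_def ..
  have qpair: "q = GM 0 r1 \<Otimes>\<^sub>M GM 0 r2" unfolding q_def by (rule pair_GM[OF r1 r2, symmetric])
  interpret pp: prob_space p unfolding p_def by (rule prob_pair_GM[OF s1 s2])
  interpret qq: prob_space q unfolding qpair by (rule prob_pair_GM[OF r1 r2])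
  have gm: "g \<in> borel_measurable borel" unfolding g_def borel_prod[symmetric] by measurable
  have hm: "h \<in> borel_measurable borel" unfolding h_def borel_prod[symmetric] by measurable
  have g0: "0 \<le> g w" for w unfolding g_def by (simp add: gdens_nonneg)
  have h0: "0 < h w" for w unfolding h_def using r1 r2 by (simp add: gdens_pos)
  have lneq: "ln (g w / h w) = ln (gdens m1 s1 (fst w) / gdens 0 r1 (fst w)) + ln (gdens m2 s2 (snd w) / gdens 0 r2 (snd w))" for w
  proof -
    have e1: "g w / h w = (gdens m1 s1 (fst w) / gdens 0 r1 (fst w)) * (gdens m2 s2 (snd w) / gdens 0 r2 (snd w))"
      unfolding g_def h_def by simp
    have "0 < gdens m1 s1 (fst w) / gdens 0 r1 (fst w)" "0 < gdens m2 s2 (snd w) / gdens 0 r2 (snd w)"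
      using s1 s2 r1 r2 by (simp_all add: gdens_pos)
    note e2 = ln_mult_pos[OF this]
    show ?thesis by (simp only: e1 e2)
  qed
  have pr1: "prob_space (GM m1 s1)" by (rule GM_prob[OF s1])
  have pr2: "prob_space (GM m2 s2)" by (rule GM_prob[OF s2])
  have m1: "(\<lambda>w. ln (gdens m1 s1 w / gdens 0 r1 w)) \<in> borel_measurable (GM m1 s1)" by (subst measurable_cong_sets[OF sets_GM refl]) measurable
  have m2: "(\<lambda>w. ln (gdens m2 s2 w / gdens 0 r2 w)) \<in> borel_measurable (GM m2 s2)" by (subst measurable_cong_sets[OF sets_GM refl]) measurable
  have i1: "integrable p (\<lambda>w. ln (gdens m1 s1 (fst w) / gdens 0 r1 (fst w)))"
    unfolding p_def pair_fst_int(1)[OF pr1 pr2 m1] by (rule GM_KL_layer(1)[OF s1 r1])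
  have i2: "integrable p (\<lambda>w. ln (gdens m2 s2 (snd w) / gdens 0 r2 (snd w)))"
    unfolding p_def pair_snd_int(1)[OF pr1 pr2 m2] by (rule GM_KL_layer(1)[OF s2 r2])
  have int: "integrable (density lborel g) (\<lambda>w. ln (g w / h w))"
    unfolding lneq pg[symmetric] using i1 i2 by (rule Bochner_Integration.integrable_add)
  have sf: "sigma_finite_measure (density lborel h)"
    using qq.sigma_finite_measure_axioms unfolding qh .
  note K = KL_dens[OF gm g0 hm h0 sf int]
  show "absolutely_continuous q p" unfolding pg qh by (rule K(1))
  show "integrable p (entropy_density (exp 1) q p)" unfolding pg qh by (rule K(2))
  have "KL_divergence (exp 1) q p = (\<integral>w. ln (g w / h w) \<partial>p)" unfolding pg qh by (rule K(3))
  also have "\<dots> = (\<integral>w. ln (gdens m1 s1 (fst w) / gdens 0 r1 (fst w)) \<partial>p) + (\<integral>w. ln (gdens m2 s2 (snd w) / gdens 0 r2 (snd w)) \<partial>p)"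
    unfolding lneq by (rule Bochner_Integration.integral_add[OF i1 i2])
  also have "\<dots> = KLl m1 s1 r1 + KLl m2 s2 r2"
    unfolding p_def pair_fst_int(2)[OF pr1 pr2 m1] pair_snd_int(2)[OF pr1 pr2 m2]
    by (simp add: GM_KL_layer(2)[OF s1 r1] GM_KL_layer(2)[OF s2 r2] KLl_def)
  finally show "KL_divergence (exp 1) q p = KLl m1 s1 r1 + KLl m2 s2 r2" .
qed

lemma gauss_prior_eq:
  "(gauss_prior r1 r2 :: ((real^'d1^'d0) \<times> (real^'d2^'d1)) measure)
     = density lborel (\<lambda>w. ennreal (gdens 0 r1 (fst w) * gdens 0 r2 (snd w)))"
  unfolding gauss_prior_def gdens_mat by simp

lemma KLl_bound:
  fixes m :: "'a::euclidean_space"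
  assumes r: "0 < r" and t: "0 < t" "t \<le> 1" and nm: "(norm m)\<^sup>2 \<le> 2 * r\<^sup>2 * real DIM('a)"
  shows "KLl m (sqrt t * r) r \<le> real DIM('a) * ((t + 1 - ln t) / 2)"
proof -
  have "ln (r / (sqrt t * r)) = - ln t / 2"
    using r t by (simp add: ln_div ln_mult ln_sqrt)
  moreover have "(sqrt t * r)\<^sup>2 / (2 * r\<^sup>2) = t / 2"
    using r t by (simp add: power_mult_distrib)
  moreover have "(norm m)\<^sup>2 / (2 * r\<^sup>2) \<le> real DIM('a)"
    using nm r by (simp add: divide_le_eq mult.commute)
  ultimately show ?thesis
    unfolding KLl_def by (simp add: field_simps)
qed

lemma lip_cont:
  fixes \<sigma> :: "real \<Rightarrow> real"
  assumes lip: "\<And>u u'. \<bar>\<sigma> u - \<sigma> u'\<bar> \<le> \<bar>u - u'\<bar>"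
  shows "continuous_on UNIV \<sigma>"
  unfolding continuous_on_iff
proof (intro ballI allI impI)
  fix x e :: real assume "0 < e"
  show "\<exists>d>0. \<forall>x'\<in>UNIV. dist x' x < d \<longrightarrow> dist (\<sigma> x') (\<sigma> x) < e"
    using \<open>0 < e\<close> lip by (intro exI[of _ e]) (auto simp: dist_real_def intro: le_less_trans)
qed

lemma fnet_cont:
  assumes c: "continuous_on UNIV \<sigma>"
  shows "continuous_on UNIV (\<lambda>z::((real^'d1^'d0) \<times> (real^'d2^'d1)) \<times> (real^'d0). fnet \<sigma> (fst z) (snd z))"
proof -
  have s: "continuous_on UNIV (\<lambda>z::((real^'d1^'d0) \<times> (real^'d2^'d1)) \<times> (real^'d0). \<sigma> (\<Sum>i\<in>UNIV. snd z $ i * fst (fst z) $ i $ j))" for j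
    by (rule continuous_on_compose2[OF c, where f="\<lambda>z. \<Sum>i\<in>UNIV. snd z $ i * fst (fst z) $ i $ j"])
       (auto intro!: continuous_on_sum continuous_on_mult continuous_on_component continuous_on_fst continuous_on_snd continuous_on_id)
  show ?thesis
    unfolding fnet_def vector_matrix_mult_def
    by (auto intro!: continuous_on_vec_lambda continuous_on_sum continuous_on_mult continuous_on_component continuous_on_fst continuous_on_snd continuous_on_id s)
qed

lemma fnet_meas:
  assumes c: "continuous_on UNIV \<sigma>"
  shows "(\<lambda>z::((real^'d1^'d0) \<times> (real^'d2^'d1)) \<times> (real^'d0). fnet \<sigma> (fst z) (snd z)) \<in> borel_measurable (borel \<Otimes>\<^sub>M borel)"
  unfolding borel_prod by (rule borel_measurable_continuous_onI[OF fnet_cont[OF c]])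

lemma norm_vm: "norm ((y :: real^'m) v* (A :: real^'n^'m)) \<le> norm y * norm A"
proof -
  have "(norm (y v* A))\<^sup>2 = (\<Sum>k\<in>UNIV. (A \<bullet> colv y k)\<^sup>2)"
    by (simp add: norm_sq_vec vm_inner)
  also have "\<dots> \<le> (\<Sum>k\<in>UNIV. (norm y)\<^sup>2 * (\<Sum>i\<in>UNIV. (A $ i $ k)\<^sup>2))"
  proof (intro sum_mono)
    fix k
    have "A \<bullet> colv y k = (\<Sum>i\<in>UNIV. y $ i * A $ i $ k)"
      using vm_inner[of y A k] by (simp add: vector_matrix_mult_def)
    also have "\<dots> = y \<bullet> (\<chi> i. A $ i $ k)" by (simp add: inner_vec_def)
    finally have "(A \<bullet> colv y k)\<^sup>2 = (y \<bullet> (\<chi> i. A $ i $ k))\<^sup>2" by simp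
    also have "\<dots> \<le> (norm y * norm (\<chi> i. A $ i $ k))\<^sup>2"
      using Cauchy_Schwarz_ineq2[of y "\<chi> i. A $ i $ k"] by (simp add: abs_le_square_iff[symmetric] abs_mult)
    also have "\<dots> = (norm y)\<^sup>2 * (\<Sum>i\<in>UNIV. (A $ i $ k)\<^sup>2)"
      by (simp add: power_mult_distrib norm_sq_vec)
    finally show "(A \<bullet> colv y k)\<^sup>2 \<le> (norm y)\<^sup>2 * (\<Sum>i\<in>UNIV. (A $ i $ k)\<^sup>2)" .
  qed
  also have "\<dots> = (norm y)\<^sup>2 * (\<Sum>k\<in>UNIV. \<Sum>i\<in>UNIV. (A $ i $ k)\<^sup>2)"
    by (simp add: sum_distrib_left)
  also have "\<dots> = (norm y)\<^sup>2 * (\<Sum>i\<in>UNIV. \<Sum>k\<in>UNIV. (A $ i $ k)\<^sup>2)"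
    by (rule arg_cong[where f="\<lambda>z. (norm y)\<^sup>2 * z"], rule sum.swap)
  also have "\<dots> = (norm y * norm A)\<^sup>2"
  proof -
    have "(norm A)\<^sup>2 = (\<Sum>i\<in>UNIV. (norm (A $ i))\<^sup>2)"
      unfolding power2_norm_eq_inner inner_vec_def[of A A] ..
    then have nA: "(norm A)\<^sup>2 = (\<Sum>i\<in>UNIV. \<Sum>k\<in>UNIV. (A $ i $ k)\<^sup>2)"
      by (simp add: norm_sq_vec)
    show ?thesis by (simp only: power_mult_distrib nA)
  qed
  finally show ?thesis
    by (rule power2_le_imp_le) simp
qed

lemma sig_lip_vec:
  fixes \<sigma> :: "real \<Rightarrow> real" and v v' :: "real^'n"
  assumes lip: "\<And>u u'. \<bar>\<sigma> u - \<sigma> u'\<bar> \<le> \<bar>u - u'\<bar>"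
  shows "norm ((\<chi> j. \<sigma> (v $ j)) - (\<chi> j. \<sigma> (v' $ j))) \<le> norm (v - v')"
proof -
  have "(norm ((\<chi> j. \<sigma> (v $ j)) - (\<chi> j. \<sigma> (v' $ j))))\<^sup>2 \<le> (norm (v - v'))\<^sup>2"
    unfolding norm_sq_vec
  proof (intro sum_mono)
    fix j
    show "(((\<chi> j. \<sigma> (v $ j)) - (\<chi> j. \<sigma> (v' $ j))) $ j)\<^sup>2 \<le> ((v - v') $ j)\<^sup>2"
      using lip[of "v $ j" "v' $ j"] by (simp add: abs_le_square_iff[symmetric] power2_abs del: power2_abs)
  qed
  then show ?thesis by (rule power2_le_imp_le) simp
qed

lemma sig_bdd_vec:
  fixes \<sigma> :: "real \<Rightarrow> real" and v :: "real^'n"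
  assumes bd: "\<And>u. \<bar>\<sigma> u\<bar> \<le> M"
  shows "(norm (\<chi> j. \<sigma> (v $ j)))\<^sup>2 \<le> real CARD('n) * M\<^sup>2"
proof -
  have "(norm (\<chi> j. \<sigma> (v $ j)))\<^sup>2 = (\<Sum>j\<in>UNIV. (\<sigma> (v $ j))\<^sup>2)" by (simp add: norm_sq_vec)
  also have "\<dots> \<le> (\<Sum>j\<in>(UNIV::'n set). M\<^sup>2)"
  proof (intro sum_mono)
    fix j
    have "\<bar>\<sigma> (v $ j)\<bar> ^ 2 \<le> M ^ 2" by (rule power_mono[OF bd]) simp
    then show "(\<sigma> (v $ j))\<^sup>2 \<le> M\<^sup>2" by simp
  qed
  finally show ?thesis by simp
qed

lemma sig_zero_vec:
  fixes \<sigma> :: "real \<Rightarrow> real" and v :: "real^'n"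
  assumes lip: "\<And>u u'. \<bar>\<sigma> u - \<sigma> u'\<bar> \<le> \<bar>u - u'\<bar>" and z: "\<sigma> 0 = 0"
  shows "(norm (\<chi> j. \<sigma> (v $ j)))\<^sup>2 \<le> (norm v)\<^sup>2"
proof -
  have e: "(\<chi> j. \<sigma> ((0::real^'n) $ j)) = 0" using z by (simp add: vec_eq_iff)
  show ?thesis using sig_lip_vec[OF lip, of v 0] unfolding e by (simp add: power_mono)
qed

lemma meas_GM: "f \<in> borel_measurable borel \<Longrightarrow> f \<in> borel_measurable (GM m s)"
  by (subst measurable_cong_sets[OF sets_GM refl])

lemma meas_pGM: "f \<in> borel_measurable (borel \<Otimes>\<^sub>M borel) \<Longrightarrow> f \<in> borel_measurable (GM m1 s1 \<Otimes>\<^sub>M GM m2 s2)"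
  by (subst measurable_cong_sets[OF sets_pair_measure_cong[OF sets_GM sets_GM] refl])

lemma vm_cont: "continuous_on UNIV (\<lambda>w::real^'n^'m. (y::real^'m) v* w)"
  unfolding vector_matrix_mult_def
  by (auto intro!: continuous_on_vec_lambda continuous_on_sum continuous_on_mult continuous_on_component continuous_on_id continuous_on_const)

lemma u_cont:
  assumes c: "continuous_on UNIV \<sigma>"
  shows "continuous_on UNIV (\<lambda>w1::real^'n^'m. \<chi> j. \<sigma> (((x::real^'m) v* w1) $ j))"
proof -
  have s: "continuous_on UNIV (\<lambda>w1::real^'n^'m. \<sigma> ((x v* w1) $ j))" for j
    by (rule continuous_on_compose2[OF c, where f="\<lambda>w1. (x v* w1) $ j"])
       (auto intro!: continuous_on_component vm_cont)
  show ?thesis by (auto intro!: continuous_on_vec_lambda s)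
qed

lemma sq_tri: "(norm (a + b :: 'a::real_normed_vector))\<^sup>2 \<le> 2 * (norm a)\<^sup>2 + 2 * (norm b)\<^sup>2"
proof -
  have "(norm (a + b))\<^sup>2 \<le> (norm a + norm b)\<^sup>2"
    by (rule power_mono[OF norm_triangle_ineq]) simp
  also have "\<dots> \<le> 2 * (norm a)\<^sup>2 + 2 * (norm b)\<^sup>2"
  proof -
    have "(norm a + norm b)\<^sup>2 + (norm a - norm b)\<^sup>2 = 2 * (norm a)\<^sup>2 + 2 * (norm b)\<^sup>2"
      by (simp add: power2_eq_square algebra_simps)
    moreover have "0 \<le> (norm a - norm b)\<^sup>2" by simp
    ultimately show ?thesis by linarith
  qed
  finally show ?thesis .
qed

lemma fnet_diff_bound:
  fixes \<sigma> :: "real \<Rightarrow> real" and x :: "real^'d0"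
    and w1 m1 :: "real^'d1^'d0" and w2 m2 :: "real^'d2^'d1"
  assumes lip: "\<And>u u'. \<bar>\<sigma> u - \<sigma> u'\<bar> \<le> \<bar>u - u'\<bar>"
  shows "(norm (fnet \<sigma> (w1, w2) x - fnet \<sigma> (m1, m2) x))\<^sup>2
     \<le> 2 * (norm ((\<chi> j. \<sigma> ((x v* w1) $ j)) v* w2 - (\<chi> j. \<sigma> ((x v* w1) $ j)) v* m2))\<^sup>2
       + 2 * (norm m2)\<^sup>2 * (norm (x v* w1 - x v* m1))\<^sup>2"
proof -
  define u1 where "u1 = (\<chi> j. \<sigma> ((x v* w1) $ j))"
  define u0 where "u0 = (\<chi> j. \<sigma> ((x v* m1) $ j))"
  have e: "fnet \<sigma> (w1, w2) x - fnet \<sigma> (m1, m2) x = (u1 v* w2 - u1 v* m2) + (u1 - u0) v* m2"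
    unfolding fnet_def u1_def u0_def by (simp add: vector_matrix_mult_diff_distrib)
  have "norm ((u1 - u0) v* m2) \<le> norm (u1 - u0) * norm m2" by (rule norm_vm)
  also have "\<dots> \<le> norm (x v* w1 - x v* m1) * norm m2"
    unfolding u1_def u0_def by (intro mult_right_mono sig_lip_vec[OF lip]) simp
  finally have "(norm ((u1 - u0) v* m2))\<^sup>2 \<le> (norm (x v* w1 - x v* m1) * norm m2)\<^sup>2"
    by (rule power_mono) simp
  then have b: "(norm ((u1 - u0) v* m2))\<^sup>2 \<le> (norm m2)\<^sup>2 * (norm (x v* w1 - x v* m1))\<^sup>2"
    by (simp add: power_mult_distrib mult.commute)
  show ?thesis
    unfolding e using sq_tri[of "u1 v* w2 - u1 v* m2" "(u1 - u0) v* m2"] b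
    unfolding u1_def by linarith
qed

lemma vmj_cont: "continuous_on UNIV (\<lambda>z::(real^'m) \<times> (real^'n^'m). fst z v* snd z)"
  unfolding vector_matrix_mult_def
  by (auto intro!: continuous_on_vec_lambda continuous_on_sum continuous_on_mult continuous_on_component continuous_on_fst continuous_on_snd continuous_on_id)

lemma cont_meas_p:
  fixes f :: "('a::euclidean_space \<times> 'b::euclidean_space) \<Rightarrow> real"
  assumes "continuous_on UNIV f"
  shows "(\<lambda>w. ennreal (f w)) \<in> borel_measurable (GM m1 s1 \<Otimes>\<^sub>M GM m2 s2)"
proof -
  have "f \<in> borel_measurable (borel \<Otimes>\<^sub>M borel)"
    unfolding borel_prod by (rule borel_measurable_continuous_onI[OF assms])
  then show ?thesis by (intro measurable_compose[OF meas_pGM]) auto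
qed

lemma exp_pair:
  fixes \<sigma> :: "real \<Rightarrow> real" and x :: "real^'d0"
    and m1 :: "real^'d1^'d0" and m2 :: "real^'d2^'d1"
  assumes lip: "\<And>u u'. \<bar>\<sigma> u - \<sigma> u'\<bar> \<le> \<bar>u - u'\<bar>" and s1: "0 < s1" and s2: "0 < s2"
  shows "(\<integral>\<^sup>+ w. ennreal ((norm (fnet \<sigma> w x - fnet \<sigma> (m1, m2) x))\<^sup>2) \<partial>(GM m1 s1 \<Otimes>\<^sub>M GM m2 s2))
    \<le> ennreal (2 * s2\<^sup>2 * real CARD('d2)) * (\<integral>\<^sup>+ w1. ennreal ((norm (\<chi> j. \<sigma> ((x v* w1) $ j)))\<^sup>2) \<partial>GM m1 s1)
      + ennreal (2 * (norm m2)\<^sup>2 * (s1\<^sup>2 * real CARD('d1) * (norm x)\<^sup>2))"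
proof -
  have c: "continuous_on UNIV \<sigma>" by (rule lip_cont[OF lip])
  define u where "u w1 = (\<chi> j. \<sigma> ((x v* w1) $ j))" for w1 :: "real^'d1^'d0"
  have uc: "continuous_on UNIV u" unfolding u_def by (rule u_cont[OF c])
  define F1 where "F1 w = 2 * (norm (u (fst w) v* snd w - u (fst w) v* m2))\<^sup>2" for w :: "(real^'d1^'d0) \<times> (real^'d2^'d1)"
  define F2 where "F2 w1 = 2 * (norm m2)\<^sup>2 * (norm (x v* w1 - x v* m1))\<^sup>2" for w1 :: "real^'d1^'d0"
  interpret p1: prob_space "GM m1 s1" by (rule GM_prob[OF s1])
  interpret p2: prob_space "GM m2 s2" by (rule GM_prob[OF s2])
  interpret pp: pair_sigma_finite "GM m1 s1" "GM m2 s2" ..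
  have c1: "continuous_on UNIV (\<lambda>w::(real^'d1^'d0) \<times> (real^'d2^'d1). (u (fst w), snd w))"
    by (auto intro!: continuous_on_Pair continuous_on_snd continuous_on_id continuous_on_compose2[OF uc, where f=fst] continuous_on_fst)
  have c2: "continuous_on UNIV (\<lambda>w::(real^'d1^'d0) \<times> (real^'d2^'d1). (u (fst w), m2))"
    by (auto intro!: continuous_on_Pair continuous_on_const continuous_on_compose2[OF uc, where f=fst] continuous_on_fst continuous_on_id)
  have cF1: "continuous_on UNIV F1"
    unfolding F1_def
    by (auto intro!: continuous_on_mult continuous_on_const continuous_on_power continuous_on_norm continuous_on_diff
        continuous_on_compose2[OF vmj_cont c1, simplified] continuous_on_compose2[OF vmj_cont c2, simplified])
  have cF2: "continuous_on UNIV (\<lambda>w::(real^'d1^'d0) \<times> (real^'d2^'d1). F2 (fst w))"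
    unfolding F2_def
    by (auto intro!: continuous_on_mult continuous_on_const continuous_on_power continuous_on_norm continuous_on_diff
        continuous_on_compose2[OF vm_cont, where f=fst] continuous_on_fst continuous_on_id)
  have mF1: "(\<lambda>w. ennreal (F1 w)) \<in> borel_measurable (GM m1 s1 \<Otimes>\<^sub>M GM m2 s2)" by (rule cont_meas_p[OF cF1])
  have mF2: "(\<lambda>w. ennreal (F2 (fst w))) \<in> borel_measurable (GM m1 s1 \<Otimes>\<^sub>M GM m2 s2)" by (rule cont_meas_p[OF cF2])
  have F1nn: "0 \<le> F1 w" for w unfolding F1_def by simp
  have F2nn: "0 \<le> F2 w" for w unfolding F2_def by simp
  have "(\<integral>\<^sup>+ w. ennreal ((norm (fnet \<sigma> w x - fnet \<sigma> (m1, m2) x))\<^sup>2) \<partial>(GM m1 s1 \<Otimes>\<^sub>M GM m2 s2))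
     \<le> (\<integral>\<^sup>+ w. ennreal (F1 w) + ennreal (F2 (fst w)) \<partial>(GM m1 s1 \<Otimes>\<^sub>M GM m2 s2))"
  proof (intro nn_integral_mono)
    fix w :: "(real^'d1^'d0) \<times> (real^'d2^'d1)"
    obtain w1 w2 where w: "w = (w1, w2)" by (cases w)
    have "(norm (fnet \<sigma> w x - fnet \<sigma> (m1, m2) x))\<^sup>2 \<le> F1 w + F2 (fst w)"
      unfolding w F1_def F2_def u_def using fnet_diff_bound[OF lip, of w1 w2 x m1 m2] by simp
    then show "ennreal ((norm (fnet \<sigma> w x - fnet \<sigma> (m1, m2) x))\<^sup>2) \<le> ennreal (F1 w) + ennreal (F2 (fst w))"
      using F1nn F2nn by (simp add: ennreal_plus[symmetric] del: ennreal_plus)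
  qed
  also have "\<dots> = (\<integral>\<^sup>+ w. ennreal (F1 w) \<partial>(GM m1 s1 \<Otimes>\<^sub>M GM m2 s2)) + (\<integral>\<^sup>+ w. ennreal (F2 (fst w)) \<partial>(GM m1 s1 \<Otimes>\<^sub>M GM m2 s2))"
    by (rule nn_integral_add[OF mF1 mF2])
  also have "(\<integral>\<^sup>+ w. ennreal (F1 w) \<partial>(GM m1 s1 \<Otimes>\<^sub>M GM m2 s2))
      = ennreal (2 * s2\<^sup>2 * real CARD('d2)) * (\<integral>\<^sup>+ w1. ennreal ((norm (u w1))\<^sup>2) \<partial>GM m1 s1)"
  proof -
    have "(\<integral>\<^sup>+ w. ennreal (F1 w) \<partial>(GM m1 s1 \<Otimes>\<^sub>M GM m2 s2)) = (\<integral>\<^sup>+ w1. \<integral>\<^sup>+ w2. ennreal (F1 (w1, w2)) \<partial>GM m2 s2 \<partial>GM m1 s1)"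
      by (rule p2.nn_integral_fst[symmetric]) (rule mF1)
    also have "\<dots> = (\<integral>\<^sup>+ w1. ennreal (2 * s2\<^sup>2 * real CARD('d2)) * ennreal ((norm (u w1))\<^sup>2) \<partial>GM m1 s1)"
    proof (intro nn_integral_cong)
      fix w1 :: "real^'d1^'d0"
      have "(\<integral>\<^sup>+ w2. ennreal (F1 (w1, w2)) \<partial>GM m2 s2) = ennreal (\<integral>w2. F1 (w1, w2) \<partial>GM m2 s2)"
        unfolding F1_def
        by (rule nn_integral_eq_integral) (auto intro!: integrable_mult_right GM_vm_centered(1)[OF s2])
      also have "\<dots> = ennreal (2 * s2\<^sup>2 * real CARD('d2) * (norm (u w1))\<^sup>2)"
        unfolding F1_def by (simp add: GM_vm_centered(2)[OF s2])
      finally show "(\<integral>\<^sup>+ w2. ennreal (F1 (w1, w2)) \<partial>GM m2 s2) = ennreal (2 * s2\<^sup>2 * real CARD('d2)) * ennreal ((norm (u w1))\<^sup>2)"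
        by (simp add: ennreal_mult)
    qed
    also have "\<dots> = ennreal (2 * s2\<^sup>2 * real CARD('d2)) * (\<integral>\<^sup>+ w1. ennreal ((norm (u w1))\<^sup>2) \<partial>GM m1 s1)"
    proof (rule nn_integral_cmult)
      have "(\<lambda>w1. (norm (u w1))\<^sup>2) \<in> borel_measurable borel"
        by (intro borel_measurable_continuous_onI continuous_on_power continuous_on_norm uc)
      then show "(\<lambda>w1. ennreal ((norm (u w1))\<^sup>2)) \<in> borel_measurable (GM m1 s1)"
        by (intro measurable_compose[OF meas_GM]) auto
    qed
    finally show ?thesis .
  qed
  also have "(\<integral>\<^sup>+ w. ennreal (F2 (fst w)) \<partial>(GM m1 s1 \<Otimes>\<^sub>M GM m2 s2)) = ennreal (2 * (norm m2)\<^sup>2 * (s1\<^sup>2 * real CARD('d1) * (norm x)\<^sup>2))"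
  proof -
    have "(\<integral>\<^sup>+ w. ennreal (F2 (fst w)) \<partial>(GM m1 s1 \<Otimes>\<^sub>M GM m2 s2)) = (\<integral>\<^sup>+ w1. \<integral>\<^sup>+ w2. ennreal (F2 w1) \<partial>GM m2 s2 \<partial>GM m1 s1)"
      using p2.nn_integral_fst[OF mF2] by simp
    also have "\<dots> = (\<integral>\<^sup>+ w1. ennreal (F2 w1) \<partial>GM m1 s1)"
      using p2.emeasure_space_1 by simp
    also have "\<dots> = ennreal (\<integral>w1. F2 w1 \<partial>GM m1 s1)"
      unfolding F2_def
      by (rule nn_integral_eq_integral) (auto intro!: integrable_mult_right GM_vm_centered(1)[OF s1])
    also have "\<dots> = ennreal (2 * (norm m2)\<^sup>2 * (s1\<^sup>2 * real CARD('d1) * (norm x)\<^sup>2))"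
      unfolding F2_def by (simp add: GM_vm_centered(2)[OF s1])
    finally show ?thesis .
  qed
  finally show ?thesis unfolding u_def .
qed

lemma meas_mu:
  assumes "sets \<mu> = sets (restrict_space borel X)" "f \<in> borel_measurable borel"
  shows "f \<in> borel_measurable \<mu>"
  by (subst measurable_cong_sets[OF assms(1) refl]) (rule measurable_restrict_space1[OF assms(2)])

definition colm :: "real^'n^'m \<Rightarrow> 'n \<Rightarrow> real^'m" where
  "colm A k = (\<chi> i. A $ i $ k)"

lemma vm_colm: "((x::real^'m) v* A) $ k = x \<bullet> colm A k"
  by (simp add: vector_matrix_mult_def colm_def inner_vec_def)

lemma norm_sq_colm: "(norm (A::real^'n^'m))\<^sup>2 = (\<Sum>k\<in>UNIV. (norm (colm A k))\<^sup>2)"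
proof -
  have "(norm A)\<^sup>2 = (\<Sum>i\<in>UNIV. (norm (A $ i))\<^sup>2)"
    unfolding power2_norm_eq_inner inner_vec_def[of A A] ..
  also have "\<dots> = (\<Sum>i\<in>UNIV. \<Sum>k\<in>UNIV. (A $ i $ k)\<^sup>2)" by (simp add: norm_sq_vec)
  also have "\<dots> = (\<Sum>k\<in>UNIV. \<Sum>i\<in>UNIV. (A $ i $ k)\<^sup>2)" by (rule sum.swap)
  also have "\<dots> = (\<Sum>k\<in>UNIV. (norm (colm A k))\<^sup>2)" by (simp add: norm_sq_vec colm_def)
  finally show ?thesis .
qed

definition outer :: "real^'n \<Rightarrow> real^'n^'n" where
  "outer x = (\<chi> i j. x $ i * x $ j)"

lemma outer_cont: "continuous_on UNIV outer"
  unfolding outer_def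
  by (auto intro!: continuous_on_vec_lambda continuous_on_mult continuous_on_component continuous_on_id)

lemma norm_outer: "norm (outer x) \<le> (norm x)\<^sup>2"
proof -
  have "(norm (outer x))\<^sup>2 = (\<Sum>i\<in>UNIV. (norm (outer x $ i))\<^sup>2)"
    unfolding power2_norm_eq_inner inner_vec_def[of "outer x" "outer x"] ..
  also have "\<dots> = (\<Sum>i\<in>UNIV. \<Sum>j\<in>UNIV. (x $ i)\<^sup>2 * (x $ j)\<^sup>2)"
    by (simp add: norm_sq_vec outer_def power_mult_distrib)
  also have "\<dots> = (\<Sum>i\<in>UNIV. (x $ i)\<^sup>2) * (\<Sum>j\<in>UNIV. (x $ j)\<^sup>2)"
    by (simp add: sum_product)
  also have "\<dots> = ((norm x)\<^sup>2)\<^sup>2"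
    unfolding norm_sq_vec[of x] by (simp only: power2_eq_square[of "\<Sum>k\<in>UNIV. (x $ k)\<^sup>2"])
  finally show ?thesis by (rule power2_le_imp_le[OF eq_refl]) simp
qed

lemma quad_outer: "c \<bullet> (outer x *v c) = (x \<bullet> c)\<^sup>2"
  by (simp add: outer_def inner_vec_def matrix_vector_mult_def power2_eq_square sum_product sum_distrib_left mult_ac)

lemma bl_quad: "bounded_linear (\<lambda>S::real^'n^'n. c \<bullet> (S *v c))"
proof -
  have "linear (\<lambda>S::real^'n^'n. c \<bullet> (S *v c))"
    by (rule linearI) (simp_all add: matrix_vector_mult_add_rdistrib inner_add_right matrix_vector_mult_def inner_vec_def sum_distrib_left mult_ac vec_eq_iff distrib_left sum.distrib)
  then show ?thesis by (simp add: linear_conv_bounded_linear)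
qed

lemma M2bar_bound:
  fixes \<mu> :: "(real^'d0) measure" and m1 :: "real^'d1^'d0"
  assumes mu_sets: "sets \<mu> = sets (restrict_space borel X)" and M2: "integrable \<mu> (\<lambda>x. (norm x)\<^sup>2)"
  shows "integrable \<mu> (\<lambda>x. (norm (x v* m1))\<^sup>2)"
    and "(\<integral>x. (norm (x v* m1))\<^sup>2 \<partial>\<mu>) \<le> M2barsq \<mu> * (norm m1)\<^sup>2"
proof -
  have om: "outer \<in> borel_measurable \<mu>"
    by (rule meas_mu[OF mu_sets borel_measurable_continuous_onI[OF outer_cont]])
  have io: "integrable \<mu> outer"
    by (rule Bochner_Integration.integrable_bound[OF M2 om]) (use norm_outer in auto)
  define S where "S = (\<integral>x. outer x \<partial>\<mu>)"
  have S_eq: "S = (\<integral>x. (\<chi> i j. x $ i * x $ j) \<partial>\<mu>)" unfolding S_def outer_def ..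
  have eq: "(norm (x v* m1))\<^sup>2 = (\<Sum>k\<in>UNIV. colm m1 k \<bullet> (outer x *v colm m1 k))" for x :: "real^'d0"
    by (simp add: norm_sq_vec vm_colm quad_outer)
  have ik: "integrable \<mu> (\<lambda>x. colm m1 k \<bullet> (outer x *v colm m1 k))" for k
    by (rule integrable_bounded_linear[OF bl_quad io])
  show "integrable \<mu> (\<lambda>x. (norm (x v* m1))\<^sup>2)"
    unfolding eq by (rule Bochner_Integration.integrable_sum[OF ik])
  have "(\<integral>x. (norm (x v* m1))\<^sup>2 \<partial>\<mu>) = (\<Sum>k\<in>UNIV. colm m1 k \<bullet> (S *v colm m1 k))"
    unfolding eq S_def
    by (subst Bochner_Integration.integral_sum[OF ik]) (simp add: integral_bounded_linear[OF bl_quad io])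
  also have "\<dots> \<le> (\<Sum>k\<in>UNIV. M2barsq \<mu> * (norm (colm m1 k))\<^sup>2)"
  proof (intro sum_mono)
    fix k
    have bl: "bounded_linear (\<lambda>v. S *v v)"
      by (simp add: linear_conv_bounded_linear[symmetric])
    have "colm m1 k \<bullet> (S *v colm m1 k) \<le> norm (colm m1 k) * norm (S *v colm m1 k)"
      by (rule Cauchy_Schwarz_ineq2[THEN order_trans[OF abs_ge_self]])
    also have "\<dots> \<le> norm (colm m1 k) * (onorm (\<lambda>v. S *v v) * norm (colm m1 k))"
      by (intro mult_left_mono onorm[OF bl]) simp
    also have "\<dots> = M2barsq \<mu> * (norm (colm m1 k))\<^sup>2"
      unfolding M2barsq_def S_eq[symmetric] by (simp add: power2_eq_square)
    finally show "colm m1 k \<bullet> (S *v colm m1 k) \<le> M2barsq \<mu> * (norm (colm m1 k))\<^sup>2" .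
  qed
  also have "\<dots> = M2barsq \<mu> * (norm m1)\<^sup>2"
    by (simp add: norm_sq_colm sum_distrib_left)
  finally show "(\<integral>x. (norm (x v* m1))\<^sup>2 \<partial>\<mu>) \<le> M2barsq \<mu> * (norm m1)\<^sup>2" .
qed

lemma M2barsq_nonneg: "0 \<le> M2barsq \<mu>"
  unfolding M2barsq_def
  by (rule onorm_pos_le) (simp add: linear_conv_bounded_linear[symmetric])

lemma RI1:
  fixes A :: real assumes A: "0 \<le> A"
  shows "1 + ln (1 + A) / 2 < ln (3 + A)"
proof -
  have e: "exp 1 < (272/100::real)" by (rule e_less_272)
  have e0: "0 < exp (1::real)" by simp
  have "(exp 1)\<^sup>2 < (272/100::real)\<^sup>2" by (rule power_strict_mono[OF e]) auto
  then have h: "(exp 1)\<^sup>2 \<le> (272/100::real)\<^sup>2" by linarith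
  have "(exp 1)\<^sup>2 * (1 + A) \<le> (272/100::real)\<^sup>2 * (1 + A)"
    by (rule mult_right_mono[OF h]) (use A in simp)
  also have "\<dots> < (3 + A)\<^sup>2"
  proof -
    have "0 \<le> (A - 0.6992)\<^sup>2" by simp
    then show ?thesis by (simp add: power2_eq_square algebra_simps)
  qed
  finally have sq: "(exp 1 * sqrt (1 + A))\<^sup>2 < (3 + A)\<^sup>2"
    using A by (simp add: power_mult_distrib)
  have lt: "exp 1 * sqrt (1 + A) < 3 + A"
    by (rule power2_less_imp_less[OF sq]) (use A in simp)
  have "1 + ln (1 + A) / 2 = ln (exp 1 * sqrt (1 + A))"
    using A by (simp add: ln_mult ln_sqrt)
  also have "\<dots> < ln (3 + A)"
    using lt A by (subst ln_less_cancel_iff) auto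
  finally show ?thesis .
qed

lemma RI2:
  fixes A :: real assumes A: "0 \<le> A"
  defines "t \<equiv> 1 / (1 + A)"
  shows "t * A / 2 + (t + 1 - ln t) / 2 = 1 + ln (1 + A) / 2"
proof -
  have pos: "0 < 1 + A" using A by simp
  have "t * (1 + A) = 1" unfolding t_def using pos by simp
  then have h1: "t * A + t = 1" by (simp add: algebra_simps)
  have h2: "ln t = - ln (1 + A)" unfolding t_def using pos by (simp add: ln_divide_pos)
  have "t * A / 2 + (t + 1 - ln t) / 2 = ((t * A + t) + 1 - ln t) / 2" by (simp add: field_simps)
  also have "\<dots> = (1 + 1 + ln (1 + A)) / 2" by (simp only: h1 h2) simp
  also have "\<dots> = 1 + ln (1 + A) / 2" by simp
  finally show ?thesis .
qed

lemma lam_lemma: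
  fixes a V K T R :: real
  assumes a: "0 \<le> a" and V: "0 \<le> V" and K: "0 < K" and VKT: "V + K < T"
    and R: "\<And>l. 0 < l \<Longrightarrow> R \<le> (1 + l) * a\<^sup>2 + (1 + 1 / l) * V"
  shows "R + K \<le> (a + sqrt T)\<^sup>2"
proof (cases "a = 0")
  case True
  show ?thesis
  proof (cases "V = 0")
    case True
    with R[of 1] \<open>a = 0\<close> have "R \<le> 0" by simp
    moreover have "(sqrt T)\<^sup>2 = T" using VKT V K by simp
    ultimately show ?thesis using \<open>a = 0\<close> VKT V by simp
  next
    case False
    define l where "l = V / (T - V - K)"
    have l: "0 < l" unfolding l_def using False V VKT by simp
    have "R \<le> (1 + 1 / l) * V" using R[OF l] \<open>a = 0\<close> by simp
    also have "\<dots> = V + (T - V - K)" unfolding l_def using False V VKT by (simp add: field_simps)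
    finally have "R + K \<le> T" by simp
    moreover have "(sqrt T)\<^sup>2 = T" using VKT V K by simp
    ultimately show ?thesis using \<open>a = 0\<close> by simp
  qed
next
  case False
  then have a0: "0 < a" using a by simp
  define q where "q = sqrt (V + K)"
  have q0: "0 < q" unfolding q_def using V K by simp
  have qq: "q\<^sup>2 = V + K" unfolding q_def using V K by simp
  define l where "l = q / a"
  have l: "0 < l" unfolding l_def using q0 a0 by simp
  have "R \<le> (1 + l) * a\<^sup>2 + (1 + 1 / l) * V" by (rule R[OF l])
  also have "\<dots> \<le> (1 + l) * a\<^sup>2 + (1 + 1 / l) * (V + K) - K"
    using l K by (simp add: field_simps)
  also have "\<dots> = (a + q)\<^sup>2 - K"
  proof -
    have e1: "(1 + l) * a\<^sup>2 = a\<^sup>2 + a * q" unfolding l_def using a0 by (simp add: field_simps power2_eq_square)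
    have e2: "(1 + 1 / l) * (V + K) = q\<^sup>2 + a * q" unfolding l_def qq[symmetric] using a0 q0 by (simp add: field_simps power2_eq_square)
    show ?thesis unfolding e1 e2 by (simp add: power2_eq_square algebra_simps)
  qed
  also have "\<dots> \<le> (a + sqrt T)\<^sup>2 - K"
  proof -
    have "q \<le> sqrt T" unfolding q_def using VKT by simp
    then show ?thesis using a q0 by (simp add: power_mono)
  qed
  finally show ?thesis by simp
qed

lemma P1_post:
  fixes \<sigma> :: "real \<Rightarrow> real" and X :: "(real^'d0) set"
    and m1 :: "real^'d1^'d0" and m2 :: "real^'d2^'d1"
  assumes lip: "\<And>u u'. \<bar>\<sigma> u - \<sigma> u'\<bar> \<le> \<bar>u - u'\<bar>" and s1: "0 < s1" and s2: "0 < s2"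
  shows "P1 \<sigma> X (GM m1 s1 \<Otimes>\<^sub>M GM m2 s2)"
  unfolding P1_def
proof (intro conjI ballI)
  show "prob_space (GM m1 s1 \<Otimes>\<^sub>M GM m2 s2)" by (rule prob_pair_GM[OF s1 s2])
  show "sets (GM m1 s1 \<Otimes>\<^sub>M GM m2 s2) = sets borel"
    by (rule trans[OF sets_pair_measure_cong[OF sets_GM sets_GM]]) (simp only: borel_prod)
  fix x :: "real^'d0" assume "x \<in> X"
  define c0 where "c0 = norm (\<chi> j::'d1. \<sigma> 0)"
  define G where "G w = c0\<^sup>2 + (norm x)\<^sup>2 * (norm (fst w))\<^sup>2 + (norm (snd w))\<^sup>2" for w :: "(real^'d1^'d0) \<times> (real^'d2^'d1)"
  have bound: "norm (fnet \<sigma> w x) \<le> G w" for w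
  proof -
    obtain w1 w2 where w: "w = (w1, w2)" by (cases w)
    define u where "u = (\<chi> j. \<sigma> ((x v* w1) $ j))"
    have "norm (u - (\<chi> j::'d1. \<sigma> ((0::real^'d1) $ j))) \<le> norm (x v* w1 - 0)"
      unfolding u_def by (rule sig_lip_vec[OF lip])
    then have "norm u \<le> norm (x v* w1) + c0"
      unfolding c0_def using norm_triangle_ineq2[of u "\<chi> j::'d1. \<sigma> 0"] by simp
    also have "\<dots> \<le> norm x * norm w1 + c0" using norm_vm[of x w1] by simp
    finally have nu: "norm u \<le> norm x * norm w1 + c0" .
    have "norm (fnet \<sigma> w x) = norm (u v* w2)" unfolding w fnet_def u_def by simp
    also have "\<dots> \<le> norm u * norm w2" by (rule norm_vm)
    also have "\<dots> \<le> (norm x * norm w1 + c0) * norm w2" by (intro mult_right_mono nu) simp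
    also have "\<dots> \<le> ((norm x * norm w1 + c0)\<^sup>2 + (norm w2)\<^sup>2) / 2"
    proof -
      have "0 \<le> (norm x * norm w1 + c0 - norm w2)\<^sup>2" by simp
      then show ?thesis by (simp add: power2_eq_square algebra_simps)
    qed
    also have "\<dots> \<le> G w"
    proof -
      have "(norm x * norm w1 + c0)\<^sup>2 \<le> 2 * (norm x * norm w1)\<^sup>2 + 2 * c0\<^sup>2"
      proof -
        have "0 \<le> (norm x * norm w1 - c0)\<^sup>2" by simp
        then show ?thesis by (simp add: power2_eq_square algebra_simps)
      qed
      then show ?thesis unfolding G_def w using zero_le_power2[of "norm w2"] by (simp add: power_mult_distrib; linarith)
    qed
    finally show ?thesis .
  qed
  interpret p1: prob_space "GM m1 s1" by (rule GM_prob[OF s1])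
  interpret p2: prob_space "GM m2 s2" by (rule GM_prob[OF s2])
  interpret pp: prob_space "GM m1 s1 \<Otimes>\<^sub>M GM m2 s2" by (rule prob_pair_GM[OF s1 s2])
  have pr1: "prob_space (GM m1 s1)" "prob_space (GM m2 s2)" by (rule GM_prob[OF s1], rule GM_prob[OF s2])
  have mn1: "(\<lambda>w. (norm w)\<^sup>2) \<in> borel_measurable (GM m1 s1)" by (intro meas_GM) measurable
  have mn2: "(\<lambda>w. (norm w)\<^sup>2) \<in> borel_measurable (GM m2 s2)" by (intro meas_GM) measurable
  have iG: "integrable (GM m1 s1 \<Otimes>\<^sub>M GM m2 s2) G"
    unfolding G_def
    by (intro Bochner_Integration.integrable_add pp.integrable_const integrable_mult_right
        pair_fst_int(1)[OF pr1 mn1, THEN iffD2] pair_snd_int(1)[OF pr1 mn2, THEN iffD2] GM_norm_sq(1) s1 s2)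
  have "(\<integral>\<^sup>+ w. ennreal (norm (fnet \<sigma> w x)) \<partial>(GM m1 s1 \<Otimes>\<^sub>M GM m2 s2)) \<le> (\<integral>\<^sup>+ w. ennreal (G w) \<partial>(GM m1 s1 \<Otimes>\<^sub>M GM m2 s2))"
    by (intro nn_integral_mono ennreal_leI bound)
  also have "\<dots> = ennreal (\<integral>w. G w \<partial>(GM m1 s1 \<Otimes>\<^sub>M GM m2 s2))"
    by (rule nn_integral_eq_integral[OF iG]) (simp add: G_def)
  also have "\<dots> < \<infinity>" by simp
  finally show "(\<integral>\<^sup>+ w. ennreal (norm (fnet \<sigma> w x)) \<partial>(GM m1 s1 \<Otimes>\<^sub>M GM m2 s2)) < \<infinity>" .
qed

lemma joint_meas:
  assumes sp: "sets p = sets borel" and mu_sets: "sets \<mu> = sets (restrict_space borel X)"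
    and f: "f \<in> borel_measurable (borel \<Otimes>\<^sub>M borel)"
  shows "f \<in> borel_measurable (p \<Otimes>\<^sub>M \<mu>)"
proof -
  have i1: "(\<lambda>x. x) \<in> measurable p borel" by (rule measurable_ident_sets[OF sp])
  have i2: "(\<lambda>x. x) \<in> measurable \<mu> borel"
    by (subst measurable_cong_sets[OF mu_sets refl]) (rule measurable_restrict_space1[OF measurable_ident_sets[OF refl]])
  have "(\<lambda>z. (fst z, snd z)) \<in> measurable (p \<Otimes>\<^sub>M \<mu>) (borel \<Otimes>\<^sub>M borel)"
    by (intro measurable_Pair measurable_compose[OF measurable_fst i1] measurable_compose[OF measurable_snd i2])
  then have "(\<lambda>z. f (fst z, snd z)) \<in> borel_measurable (p \<Otimes>\<^sub>M \<mu>)"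
    by (rule measurable_compose) (rule f)
  then show ?thesis by simp
qed

lemma young_sq:
  fixes a b :: "'a::real_inner" assumes l: "0 < l"
  shows "(norm (a + b))\<^sup>2 \<le> (1 + 1 / l) * (norm a)\<^sup>2 + (1 + l) * (norm b)\<^sup>2"
proof -
  have "(norm (a + b))\<^sup>2 \<le> (norm a + norm b)\<^sup>2"
    by (rule power_mono[OF norm_triangle_ineq]) simp
  also have "\<dots> = (norm a)\<^sup>2 + 2 * norm a * norm b + (norm b)\<^sup>2" by (simp add: power2_eq_square algebra_simps)
  also have "2 * norm a * norm b \<le> (norm a)\<^sup>2 / l + l * (norm b)\<^sup>2"
  proof -
    have "0 \<le> (norm a - l * norm b)\<^sup>2" by simp
    then have h: "2 * l * norm a * norm b \<le> (norm a)\<^sup>2 + l\<^sup>2 * (norm b)\<^sup>2"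
      by (simp add: power2_eq_square algebra_simps)
    have "2 * norm a * norm b = (2 * l * norm a * norm b) / l" using l by simp
    also have "\<dots> \<le> ((norm a)\<^sup>2 + l\<^sup>2 * (norm b)\<^sup>2) / l"
      by (rule divide_right_mono[OF h]) (use l in simp)
    also have "\<dots> = (norm a)\<^sup>2 / l + l * (norm b)\<^sup>2"
      using l by (simp add: field_simps power2_eq_square)
    finally show ?thesis .
  qed
  finally show ?thesis by (simp add: algebra_simps)
qed

lemma fnet_x_cont:
  assumes c: "continuous_on UNIV \<sigma>"
  shows "continuous_on UNIV (\<lambda>x. fnet \<sigma> (w::(real^'d1^'d0) \<times> (real^'d2^'d1)) (x::real^'d0))"
  by (rule continuous_on_compose2[OF fnet_cont[OF c], of UNIV "\<lambda>x. (w, x)", simplified])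
     (auto intro!: continuous_on_Pair continuous_on_const continuous_on_id)

lemma diff_joint_cont:
  assumes c: "continuous_on UNIV \<sigma>"
  shows "continuous_on UNIV (\<lambda>z::((real^'d1^'d0) \<times> (real^'d2^'d1)) \<times> (real^'d0).
     (norm (fnet \<sigma> (fst z) (snd z) - fnet \<sigma> m (snd z)))\<^sup>2)"
proof -
  have c2: "continuous_on UNIV (\<lambda>z::((real^'d1^'d0) \<times> (real^'d2^'d1)) \<times> (real^'d0). fnet \<sigma> m (snd z))"
    by (rule continuous_on_compose2[OF fnet_cont[OF c], of UNIV "\<lambda>z. (m, snd z)", simplified])
       (auto intro!: continuous_on_Pair continuous_on_const continuous_on_snd continuous_on_id)
  show ?thesis
    by (intro continuous_on_power continuous_on_norm continuous_on_diff fnet_cont[OF c] c2)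
qed

lemma core:
  fixes \<sigma> :: "real \<Rightarrow> real"
    and X :: "(real^'d0) set"
    and \<mu> :: "(real^'d0) measure"
    and P :: "'z measure"
    and fhat :: "'z \<Rightarrow> real^'d0 \<Rightarrow> real^'d2"
    and fP :: "real^'d0 \<Rightarrow> real^'d2"
    and \<rho>1 \<rho>2 \<beta> C E :: real
    and n :: nat
    and m1 :: "real^'d1^'d0" and m2 :: "real^'d2^'d1"
  defines "\<pi> \<equiv> (gauss_prior \<rho>1 \<rho>2 :: ((real^'d1^'d0) \<times> (real^'d2^'d1)) measure)"
    and "d \<equiv> real (CARD('d0) * CARD('d1) + CARD('d1) * CARD('d2))"
  assumes lip: "\<And>u u'. \<bar>\<sigma> u - \<sigma> u'\<bar> \<le> \<bar>u - u'\<bar>"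
    and mu_sets: "sets \<mu> = sets (restrict_space borel X)"
    and mu_sf: "sigma_finite_measure \<mu>"
    and rho: "\<rho>1 > 0" "\<rho>2 > 0"
    and beta: "\<beta> > 0" and Cpos: "C > 0" and n: "n > 0"
    and fP: "in_L2 \<mu> fP"
    and pb: "pac_bayes_bound P \<mu> X \<sigma> fhat fP \<pi> \<beta> n C"
    and nm1: "(norm m1)\<^sup>2 \<le> 2 * \<rho>1\<^sup>2 * real (CARD('d0) * CARD('d1))"
    and nm2: "(norm m2)\<^sup>2 \<le> 2 * \<rho>2\<^sup>2 * real (CARD('d1) * CARD('d2))"
    and E0: "0 \<le> E"
    and Lf: "L2sq \<mu> (\<lambda>x. fnet \<sigma> (m1, m2) x - fP x) < \<infinity>"
    and V: "\<And>t. 0 < t \<Longrightarrow> t \<le> 1 \<Longrightarrow>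
      (\<integral>\<^sup>+ x. \<integral>\<^sup>+ w. ennreal ((norm (fnet \<sigma> w x - fnet \<sigma> (m1, m2) x))\<^sup>2)
          \<partial>(GM m1 (sqrt t * \<rho>1) \<Otimes>\<^sub>M GM m2 (sqrt t * \<rho>2)) \<partial>\<mu>) \<le> ennreal (t * E / 2)"
  shows "risk P \<mu> fhat fP < \<infinity> \<and>
    sqrt (enn2real (risk P \<mu> fhat fP) / C)
      \<le> L2norm \<mu> (\<lambda>x. fnet \<sigma> (m1, m2) x - fP x) + sqrt (\<beta> * d / real n * ln (3 + real n * E / (d * \<beta>)))"
proof -
  have c: "continuous_on UNIV \<sigma>" by (rule lip_cont[OF lip])
  have d0: "0 < d" unfolding d_def by (auto intro!: add_pos_pos mult_pos_pos)
  define A where "A = real n * E / (d * \<beta>)"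
  have A0: "0 \<le> A" unfolding A_def using E0 d0 beta by simp
  define t where "t = 1 / (1 + A)"
  have t0: "0 < t" and t1: "t \<le> 1" unfolding t_def using A0 by auto
  define s1 where "s1 = sqrt t * \<rho>1"
  define s2 where "s2 = sqrt t * \<rho>2"
  have s1: "0 < s1" and s2: "0 < s2" unfolding s1_def s2_def using t0 rho by auto
  define p where "p = GM m1 s1 \<Otimes>\<^sub>M GM m2 s2"
  interpret pp: prob_space p unfolding p_def by (rule prob_pair_GM[OF s1 s2])
  interpret mu: sigma_finite_measure \<mu> by (rule mu_sf)
  interpret pm: pair_sigma_finite p \<mu> ..
  have sp: "sets p = sets borel"
    unfolding p_def by (rule trans[OF sets_pair_measure_cong[OF sets_GM sets_GM]]) (simp only: borel_prod)
  have P1p: "P1 \<sigma> X p" unfolding p_def by (rule P1_post[OF lip s1 s2])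
  note K = KL_post[OF s1 s2 rho(1) rho(2), of m1 m2]
  have pi_eq: "\<pi> = density lborel (\<lambda>w. ennreal (gdens 0 \<rho>1 (fst w) * gdens 0 \<rho>2 (snd w)))"
    unfolding \<pi>_def by (rule gauss_prior_eq)
  have KLf: "KL_finite p \<pi>"
    unfolding KL_finite_def pi_eq p_def using K(1,2) by simp
  define Kb where "Kb = d * ((t + 1 - ln t) / 2)"
  have Kb0: "0 \<le> Kb"
  proof -
    have "ln t \<le> 0" using t0 t1 by simp
    then have "0 \<le> t + 1 - ln t" using t0 by linarith
    then show "0 \<le> Kb" unfolding Kb_def using d0 by simp
  qed
  have KLb: "KL p \<pi> \<le> Kb"
  proof -
    have "KL p \<pi> = KLl m1 s1 \<rho>1 + KLl m2 s2 \<rho>2"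
      unfolding KL_def pi_eq p_def using K(3) by simp
    also have "\<dots> \<le> real DIM(real^'d1^'d0) * ((t + 1 - ln t) / 2) + real DIM(real^'d2^'d1) * ((t + 1 - ln t) / 2)"
      unfolding s1_def s2_def
      by (intro add_mono KLl_bound rho t0 t1) (use nm1 nm2 in simp_all)
    also have "\<dots> = Kb" unfolding Kb_def d_def by (simp add: algebra_simps)
    finally show ?thesis .
  qed
  define a where "a = L2norm \<mu> (\<lambda>x. fnet \<sigma> (m1, m2) x - fP x)"
  have a0: "0 \<le> a" unfolding a_def L2norm_def by simp
  have La: "L2sq \<mu> (\<lambda>x. fnet \<sigma> (m1, m2) x - fP x) = ennreal (a\<^sup>2)"
    unfolding a_def L2norm_def using Lf by (simp add: ennreal_enn2real_if less_top[symmetric])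
  define Rp where "Rp = (\<integral>\<^sup>+ w. L2sq \<mu> (\<lambda>x. fnet \<sigma> w x - fP x) \<partial>p)"
  have fPm: "fP \<in> borel_measurable \<mu>" using fP unfolding in_L2_def by simp
  have fnm: "fnet \<sigma> w \<in> borel_measurable \<mu>" for w
    by (rule meas_mu[OF mu_sets borel_measurable_continuous_onI[OF fnet_x_cont[OF c]]])
  have jm: "(\<lambda>(w, x). ennreal ((norm (fnet \<sigma> w x - fnet \<sigma> (m1, m2) x))\<^sup>2)) \<in> borel_measurable (p \<Otimes>\<^sub>M \<mu>)"
  proof -
    have "(\<lambda>z. (norm (fnet \<sigma> (fst z) (snd z) - fnet \<sigma> (m1, m2) (snd z)))\<^sup>2) \<in> borel_measurable (borel \<Otimes>\<^sub>M borel)"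
      unfolding borel_prod by (rule borel_measurable_continuous_onI[OF diff_joint_cont[OF c]])
    then have "(\<lambda>z. (norm (fnet \<sigma> (fst z) (snd z) - fnet \<sigma> (m1, m2) (snd z)))\<^sup>2) \<in> borel_measurable (p \<Otimes>\<^sub>M \<mu>)"
      by (rule joint_meas[OF sp mu_sets])
    then show ?thesis by (simp add: split_beta')
  qed
  have Rb: "Rp \<le> ennreal ((1 + l) * a\<^sup>2 + (1 + 1 / l) * (t * E / 2))" if l: "0 < l" for l
  proof -
    define G where "G w = (\<integral>\<^sup>+ x. ennreal ((norm (fnet \<sigma> w x - fnet \<sigma> (m1, m2) x))\<^sup>2) \<partial>\<mu>)" for w :: "(real^'d1^'d0) \<times> (real^'d2^'d1)"
    have Gm: "G \<in> borel_measurable p"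
      unfolding G_def using mu.borel_measurable_nn_integral[OF jm] by simp
    have pw: "L2sq \<mu> (\<lambda>x. fnet \<sigma> w x - fP x) \<le> ennreal (1 + 1 / l) * G w + ennreal (1 + l) * ennreal (a\<^sup>2)" for w
    proof -
      have "L2sq \<mu> (\<lambda>x. fnet \<sigma> w x - fP x)
          \<le> (\<integral>\<^sup>+ x. ennreal (1 + 1 / l) * ennreal ((norm (fnet \<sigma> w x - fnet \<sigma> (m1, m2) x))\<^sup>2)
                 + ennreal (1 + l) * ennreal ((norm (fnet \<sigma> (m1, m2) x - fP x))\<^sup>2) \<partial>\<mu>)"
        unfolding L2sq_def
      proof (intro nn_integral_mono)
        fix x
        have "(norm (fnet \<sigma> w x - fP x))\<^sup>2 = (norm ((fnet \<sigma> w x - fnet \<sigma> (m1, m2) x) + (fnet \<sigma> (m1, m2) x - fP x)))\<^sup>2"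
          by simp
        also have "\<dots> \<le> (1 + 1 / l) * (norm (fnet \<sigma> w x - fnet \<sigma> (m1, m2) x))\<^sup>2 + (1 + l) * (norm (fnet \<sigma> (m1, m2) x - fP x))\<^sup>2"
          by (rule young_sq[OF l])
        finally show "ennreal ((norm (fnet \<sigma> w x - fP x))\<^sup>2)
            \<le> ennreal (1 + 1 / l) * ennreal ((norm (fnet \<sigma> w x - fnet \<sigma> (m1, m2) x))\<^sup>2)
              + ennreal (1 + l) * ennreal ((norm (fnet \<sigma> (m1, m2) x - fP x))\<^sup>2)"
          using l by (simp add: ennreal_mult[symmetric] ennreal_plus[symmetric] del: ennreal_plus)
      qed
      also have "\<dots> = ennreal (1 + 1 / l) * G w + ennreal (1 + l) * L2sq \<mu> (\<lambda>x. fnet \<sigma> (m1, m2) x - fP x)"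
        unfolding G_def L2sq_def
        using fnm[of w] fnm[of "(m1, m2)"] fPm
        by (subst nn_integral_add) (auto simp: nn_integral_cmult)
      finally show ?thesis unfolding La .
    qed
    have "Rp \<le> (\<integral>\<^sup>+ w. ennreal (1 + 1 / l) * G w + ennreal (1 + l) * ennreal (a\<^sup>2) \<partial>p)"
      unfolding Rp_def by (intro nn_integral_mono pw)
    also have "\<dots> = ennreal (1 + 1 / l) * (\<integral>\<^sup>+ w. G w \<partial>p) + ennreal (1 + l) * ennreal (a\<^sup>2)"
      using Gm by (subst nn_integral_add) (auto simp: nn_integral_cmult pp.emeasure_space_1)
    also have "(\<integral>\<^sup>+ w. G w \<partial>p) = (\<integral>\<^sup>+ x. \<integral>\<^sup>+ w. ennreal ((norm (fnet \<sigma> w x - fnet \<sigma> (m1, m2) x))\<^sup>2) \<partial>p \<partial>\<mu>)"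
      unfolding G_def by (rule pm.Fubini'[symmetric]) (use jm in simp)
    also have "\<dots> \<le> ennreal (t * E / 2)"
      unfolding p_def s1_def s2_def by (rule V[OF t0 t1])
    finally have "Rp \<le> ennreal (1 + 1 / l) * ennreal (t * E / 2) + ennreal (1 + l) * ennreal (a\<^sup>2)"
      by (simp add: mult_left_mono add_right_mono)
    also have "\<dots> = ennreal ((1 + l) * a\<^sup>2 + (1 + 1 / l) * (t * E / 2))"
      using l t0 E0 by (simp add: ennreal_mult[symmetric] ennreal_plus[symmetric] add.commute del: ennreal_plus)
    finally show ?thesis .
  qed
  have Rfin: "Rp < \<infinity>" using Rb[of 1] by (simp add: le_less_trans)
  define R where "R = enn2real Rp"
  have RpR: "Rp = ennreal R" unfolding R_def using Rfin by simp
  have R0: "0 \<le> R" unfolding R_def by simp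
  have RR: "R \<le> (1 + l) * a\<^sup>2 + (1 + 1 / l) * (t * E / 2)" if "0 < l" for l
    using Rb[OF that] unfolding RpR using t0 E0 that a0
    by (subst (asm) ennreal_le_iff) (auto intro!: add_nonneg_nonneg mult_nonneg_nonneg)
  have "risk P \<mu> fhat fP \<le> ennreal C * (Rp + ennreal (\<beta> / real n * KL p \<pi>))"
    using pb P1p KLf unfolding pac_bayes_bound_def Rp_def by blast
  also have "\<dots> \<le> ennreal C * (ennreal R + ennreal (\<beta> / real n * Kb))"
    unfolding RpR
    by (intro mult_left_mono add_left_mono ennreal_leI mult_left_mono[OF KLb]) (use beta n in auto)
  also have "\<dots> = ennreal (C * (R + \<beta> / real n * Kb))"
  proof -
    show ?thesis using Kb0 Cpos R0 beta n
      by (simp add: ennreal_mult[symmetric] ennreal_plus[symmetric] del: ennreal_plus)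
  qed
  finally have risk_le: "risk P \<mu> fhat fP \<le> ennreal (C * (R + \<beta> / real n * Kb))" .
  then have rfin: "risk P \<mu> fhat fP < \<infinity>" by (simp add: le_less_trans)
  have rr: "enn2real (risk P \<mu> fhat fP) / C \<le> R + \<beta> / real n * Kb"
  proof -
    have "enn2real (risk P \<mu> fhat fP) \<le> C * (R + \<beta> / real n * Kb)"
    proof -
      have "enn2real (risk P \<mu> fhat fP) \<le> enn2real (ennreal (C * (R + \<beta> / real n * Kb)))"
        by (rule enn2real_mono[OF risk_le]) simp
      also have "\<dots> = C * (R + \<beta> / real n * Kb)"
        using Kb0 Cpos R0 beta n by simp
      finally show ?thesis .
    qed
    then show ?thesis using Cpos by (simp add: divide_le_eq mult.commute)
  qed
  define T where "T = \<beta> * d / real n * ln (3 + real n * E / (d * \<beta>))"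
  define Vt where "Vt = t * E / 2"
  define Kt where "Kt = \<beta> / real n * Kb"
  have bdn: "0 < \<beta> * d / real n" using beta d0 n by simp
  have VK: "Vt + Kt = \<beta> * d / real n * (1 + ln (1 + A) / 2)"
  proof -
    have "E = A * (\<beta> * d / real n)" unfolding A_def using beta d0 n by (simp add: field_simps)
    then have "Vt + Kt = \<beta> * d / real n * (t * A / 2 + (t + 1 - ln t) / 2)"
      unfolding Vt_def Kt_def Kb_def using n by (simp add: field_simps)
    also have "\<dots> = \<beta> * d / real n * (1 + ln (1 + A) / 2)"
      unfolding t_def by (subst RI2[OF A0]) simp
    finally show ?thesis .
  qed
  have VKT: "Vt + Kt < T"
    unfolding VK T_def A_def[symmetric] by (rule mult_strict_left_mono[OF RI1[OF A0] bdn])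
  have Kt0: "0 < Kt"
  proof -
    have "ln t \<le> 0" using t0 t1 by simp
    then have "0 < t + 1 - ln t" using t0 by linarith
    then have "0 < (t + 1 - ln t) / 2" by simp
    then show ?thesis unfolding Kt_def Kb_def using beta n d0 by simp
  qed
  have Vt0: "0 \<le> Vt" unfolding Vt_def using t0 E0 by simp
  have "R + Kt \<le> (a + sqrt T)\<^sup>2"
    by (rule lam_lemma[OF a0 Vt0 Kt0 VKT]) (use RR in \<open>simp add: Vt_def\<close>)
  then have "enn2real (risk P \<mu> fhat fP) / C \<le> (a + sqrt T)\<^sup>2" using rr unfolding Kt_def by simp
  then have "sqrt (enn2real (risk P \<mu> fhat fP) / C) \<le> sqrt ((a + sqrt T)\<^sup>2)" by (rule real_sqrt_le_mono)
  also have "\<dots> = a + sqrt T"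
  proof -
    have "0 \<le> T" using VKT Vt0 Kt0 by linarith
    then show ?thesis using a0 by simp
  qed
  finally show ?thesis using rfin unfolding a_def T_def by simp
qed

lemma L2sq_diff_fin:
  fixes f g :: "'a \<Rightarrow> real^'n"
  assumes [measurable]: "f \<in> borel_measurable \<mu>" "g \<in> borel_measurable \<mu>"
    and "L2sq \<mu> f < \<infinity>" "L2sq \<mu> g < \<infinity>"
  shows "L2sq \<mu> (\<lambda>x. f x - g x) < \<infinity>"
proof -
  have "L2sq \<mu> (\<lambda>x. f x - g x) \<le> (\<integral>\<^sup>+ x. 2 * ennreal ((norm (f x))\<^sup>2) + 2 * ennreal ((norm (g x))\<^sup>2) \<partial>\<mu>)"
    unfolding L2sq_def
  proof (intro nn_integral_mono)
    fix x
    have "(norm (f x - g x))\<^sup>2 \<le> 2 * (norm (f x))\<^sup>2 + 2 * (norm (- g x))\<^sup>2"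
      using sq_tri[of "f x" "- g x"] by simp
    then have that: "(norm (f x - g x))\<^sup>2 \<le> 2 * (norm (f x))\<^sup>2 + 2 * (norm (g x))\<^sup>2" by simp
    show "ennreal ((norm (f x - g x))\<^sup>2) \<le> 2 * ennreal ((norm (f x))\<^sup>2) + 2 * ennreal ((norm (g x))\<^sup>2)"
    proof -
      have "ennreal ((norm (f x - g x))\<^sup>2) \<le> ennreal (2 * (norm (f x))\<^sup>2 + 2 * (norm (g x))\<^sup>2)"
        using that by (intro ennreal_leI) simp
      also have "\<dots> = 2 * ennreal ((norm (f x))\<^sup>2) + 2 * ennreal ((norm (g x))\<^sup>2)"
        by (simp add: ennreal_plus ennreal_mult)
      finally show ?thesis .
    qed
  qed
  also have "\<dots> = 2 * L2sq \<mu> f + 2 * L2sq \<mu> g"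
    unfolding L2sq_def by (subst nn_integral_add) (auto simp: nn_integral_cmult)
  also have "\<dots> < \<infinity>" using assms(3,4) by (simp add: ennreal_mult_less_top)
  finally show ?thesis .
qed

lemma space_mu:
  assumes "sets \<mu> = sets (restrict_space borel X)"
  shows "space \<mu> = X"
  using sets_eq_imp_space_eq[OF assms] by (simp add: space_restrict_space)

lemma M2sq_int:
  "(\<integral>x. (norm x)\<^sup>2 \<partial>\<mu>) = real CARD('d0) * M2sq (\<mu> :: (real^'d0) measure)"
  unfolding M2sq_def by simp

lemma M2sq_nonneg: "0 \<le> M2sq \<mu>"
  unfolding M2sq_def by (simp add: integral_nonneg_AE)

lemma fnet_sq_le:
  "(norm (fnet \<sigma> (m1, m2) x))\<^sup>2 \<le> (norm (\<chi> j. \<sigma> (((x::real^'d0) v* (m1::real^'d1^'d0)) $ j)))\<^sup>2 * (norm (m2::real^'d2^'d1))\<^sup>2"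
proof -
  have "norm (fnet \<sigma> (m1, m2) x) \<le> norm (\<chi> j. \<sigma> ((x v* m1) $ j)) * norm m2"
    unfolding fnet_def by (simp add: norm_vm)
  then show ?thesis by (metis norm_ge_zero power_mono power_mult_distrib)
qed

lemma bcase:
  fixes \<sigma> :: "real \<Rightarrow> real"
    and X :: "(real^'d0) set"
    and \<mu> :: "(real^'d0) measure"
    and P :: "'z measure"
    and fhat :: "'z \<Rightarrow> real^'d0 \<Rightarrow> real^'d2"
    and fP :: "real^'d0 \<Rightarrow> real^'d2"
    and \<rho>1 \<rho>2 \<beta> C M :: real
    and n :: nat
    and m1 :: "real^'d1^'d0" and m2 :: "real^'d2^'d1"
  defines "\<pi> \<equiv> (gauss_prior \<rho>1 \<rho>2 :: ((real^'d1^'d0) \<times> (real^'d2^'d1)) measure)"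
    and "B1 \<equiv> \<rho>1 * sqrt (2 * real CARD('d0) * real CARD('d1))"
    and "B2 \<equiv> \<rho>2 * sqrt (2 * real CARD('d1) * real CARD('d2))"
    and "d \<equiv> real (CARD('d0) * CARD('d1) + CARD('d1) * CARD('d2))"
  assumes lip: "\<And>u u'. \<bar>\<sigma> u - \<sigma> u'\<bar> \<le> \<bar>u - u'\<bar>"
    and mu_sets: "sets \<mu> = sets (restrict_space borel X)"
    and mu_sf: "sigma_finite_measure \<mu>"
    and M2: "integrable \<mu> (\<lambda>x. (norm x)\<^sup>2)"
    and rho: "\<rho>1 > 0" "\<rho>2 > 0"
    and beta: "\<beta> > 0" and Cpos: "C > 0" and n: "n > 0"
    and fP: "in_L2 \<mu> fP"
    and pb: "pac_bayes_bound P \<mu> X \<sigma> fhat fP \<pi> \<beta> n C"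
    and bd: "\<And>u. \<bar>\<sigma> u\<bar> \<le> M" and finX: "emeasure \<mu> X < \<infinity>"
    and w1: "norm m1 \<le> B1" and w2: "norm m2 \<le> B2"
  shows "risk P \<mu> fhat fP < \<infinity> \<and>
    sqrt (enn2real (risk P \<mu> fhat fP) / C)
      \<le> L2norm \<mu> (\<lambda>x. fnet \<sigma> (m1, m2) x - fP x)
        + sqrt (\<beta> * d / real n * ln (3 + real n * (3 * B2\<^sup>2 * (B1\<^sup>2 * M2sq \<mu> + measure \<mu> X * M\<^sup>2)) / (d * \<beta>)))"
  unfolding d_def \<pi>_def
proof (rule core[OF lip mu_sets mu_sf rho beta Cpos n fP])
  show "pac_bayes_bound P \<mu> X \<sigma> fhat fP (gauss_prior \<rho>1 \<rho>2 :: ((real^'d1^'d0) \<times> (real^'d2^'d1)) measure) \<beta> n C" using pb unfolding \<pi>_def .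
  define D0 where "D0 = real CARD('d0)"
  define D1 where "D1 = real CARD('d1)"
  define D2 where "D2 = real CARD('d2)"
  have D0: "1 \<le> D0" and D1: "1 \<le> D1" and D2: "1 \<le> D2" unfolding D0_def D1_def D2_def
    by (simp_all add: Suc_leI)
  have B1sq: "B1\<^sup>2 = 2 * \<rho>1\<^sup>2 * (D0 * D1)" unfolding B1_def D0_def D1_def
    by (simp add: power_mult_distrib)
  have B2sq: "B2\<^sup>2 = 2 * \<rho>2\<^sup>2 * (D1 * D2)" unfolding B2_def D1_def D2_def
    by (simp add: power_mult_distrib)
  have B10: "0 \<le> B1" and B20: "0 \<le> B2" unfolding B1_def B2_def using rho by auto
  have nm1: "(norm m1)\<^sup>2 \<le> B1\<^sup>2" using w1 by (simp add: power_mono)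
  have nm2: "(norm m2)\<^sup>2 \<le> B2\<^sup>2" using w2 by (simp add: power_mono)
  show "(norm m1)\<^sup>2 \<le> 2 * \<rho>1\<^sup>2 * real (CARD('d0) * CARD('d1))"
    using nm1 B1sq unfolding D0_def D1_def by simp
  show "(norm m2)\<^sup>2 \<le> 2 * \<rho>2\<^sup>2 * real (CARD('d1) * CARD('d2))"
    using nm2 B2sq unfolding D1_def D2_def by simp
  have M0: "0 \<le> M" using bd[of 0] by linarith
  have mX: "0 \<le> measure \<mu> X" by simp
  have M2s: "0 \<le> M2sq \<mu>" by (rule M2sq_nonneg)
  define E where "E = 3 * B2\<^sup>2 * (B1\<^sup>2 * M2sq \<mu> + measure \<mu> X * M\<^sup>2)"
  have E0: "0 \<le> E" unfolding E_def using mX M2s by simp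
  show "0 \<le> 3 * B2\<^sup>2 * (B1\<^sup>2 * M2sq \<mu> + measure \<mu> X * M\<^sup>2)" using E0 unfolding E_def .
  have c: "continuous_on UNIV \<sigma>" by (rule lip_cont[OF lip])
  have sX: "space \<mu> = X" by (rule space_mu[OF mu_sets])
  have eX: "emeasure \<mu> X = ennreal (measure \<mu> X)" using finX by (simp add: emeasure_eq_ennreal_measure)
  have usq: "(norm (\<chi> j::'d1. \<sigma> (v $ j)))\<^sup>2 \<le> D1 * M\<^sup>2" for v :: "real^'d1"
    unfolding D1_def by (rule sig_bdd_vec[OF bd])
  have fnm: "fnet \<sigma> w \<in> borel_measurable \<mu>" for w
    by (rule meas_mu[OF mu_sets borel_measurable_continuous_onI[OF fnet_x_cont[OF c]]])
  have fPm: "fP \<in> borel_measurable \<mu>" using fP unfolding in_L2_def by simp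
  have "L2sq \<mu> (fnet \<sigma> (m1, m2)) \<le> (\<integral>\<^sup>+ x. ennreal (D1 * M\<^sup>2 * (norm m2)\<^sup>2) \<partial>\<mu>)"
    unfolding L2sq_def
  proof (intro nn_integral_mono ennreal_leI)
    fix x
    show "(norm (fnet \<sigma> (m1, m2) x))\<^sup>2 \<le> D1 * M\<^sup>2 * (norm m2)\<^sup>2"
      by (rule order_trans[OF fnet_sq_le]) (intro mult_right_mono usq, simp)
  qed
  also have "\<dots> < \<infinity>" using finX sX by (simp add: ennreal_mult_less_top)
  finally have "L2sq \<mu> (fnet \<sigma> (m1, m2)) < \<infinity>" .
  then show "L2sq \<mu> (\<lambda>x. fnet \<sigma> (m1, m2) x - fP x) < \<infinity>"
    by (intro L2sq_diff_fin fnm fPm) (use fP in \<open>auto simp: in_L2_def\<close>)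
  fix t :: real assume t0: "0 < t" and t1: "t \<le> 1"
  define s1 where "s1 = sqrt t * \<rho>1"
  define s2 where "s2 = sqrt t * \<rho>2"
  have s1: "0 < s1" and s2: "0 < s2" unfolding s1_def s2_def using t0 rho by auto
  have s1sq: "s1\<^sup>2 = t * \<rho>1\<^sup>2" and s2sq: "s2\<^sup>2 = t * \<rho>2\<^sup>2"
    unfolding s1_def s2_def using t0 by (simp_all add: power_mult_distrib)
  define k0 where "k0 = 2 * s2\<^sup>2 * D2 * (D1 * M\<^sup>2)"
  define k1 where "k1 = 2 * (norm m2)\<^sup>2 * (s1\<^sup>2 * D1)"
  have k0: "0 \<le> k0" and k1: "0 \<le> k1" unfolding k0_def k1_def using D1 D2 by auto
  have inner: "(\<integral>\<^sup>+ w. ennreal ((norm (fnet \<sigma> w x - fnet \<sigma> (m1, m2) x))\<^sup>2) \<partial>(GM m1 s1 \<Otimes>\<^sub>M GM m2 s2))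
      \<le> ennreal k0 + ennreal (k1 * (norm x)\<^sup>2)" for x
  proof -
    interpret p1: prob_space "GM m1 s1" by (rule GM_prob[OF s1])
    have "(\<integral>\<^sup>+ w1. ennreal ((norm (\<chi> j. \<sigma> ((x v* w1) $ j)))\<^sup>2) \<partial>GM m1 s1) \<le> (\<integral>\<^sup>+ w1. ennreal (D1 * M\<^sup>2) \<partial>GM m1 s1)"
      by (intro nn_integral_mono ennreal_leI usq)
    also have "\<dots> = ennreal (D1 * M\<^sup>2)" using p1.emeasure_space_1 by simp
    finally have u: "(\<integral>\<^sup>+ w1. ennreal ((norm (\<chi> j. \<sigma> ((x v* w1) $ j)))\<^sup>2) \<partial>GM m1 s1) \<le> ennreal (D1 * M\<^sup>2)" .
    have "(\<integral>\<^sup>+ w. ennreal ((norm (fnet \<sigma> w x - fnet \<sigma> (m1, m2) x))\<^sup>2) \<partial>(GM m1 s1 \<Otimes>\<^sub>M GM m2 s2))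
      \<le> ennreal (2 * s2\<^sup>2 * D2) * (\<integral>\<^sup>+ w1. ennreal ((norm (\<chi> j. \<sigma> ((x v* w1) $ j)))\<^sup>2) \<partial>GM m1 s1)
        + ennreal (2 * (norm m2)\<^sup>2 * (s1\<^sup>2 * D1 * (norm x)\<^sup>2))"
      unfolding D1_def D2_def by (rule exp_pair[OF lip s1 s2])
    also have "\<dots> \<le> ennreal (2 * s2\<^sup>2 * D2) * ennreal (D1 * M\<^sup>2) + ennreal (2 * (norm m2)\<^sup>2 * (s1\<^sup>2 * D1 * (norm x)\<^sup>2))"
      by (intro add_right_mono mult_left_mono u) simp
    also have "\<dots> = ennreal k0 + ennreal (k1 * (norm x)\<^sup>2)"
      unfolding k0_def k1_def using D1 D2 by (simp add: ennreal_mult[symmetric] mult_ac)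
    finally show ?thesis .
  qed
  have "(\<integral>\<^sup>+ x. \<integral>\<^sup>+ w. ennreal ((norm (fnet \<sigma> w x - fnet \<sigma> (m1, m2) x))\<^sup>2) \<partial>(GM m1 s1 \<Otimes>\<^sub>M GM m2 s2) \<partial>\<mu>)
      \<le> (\<integral>\<^sup>+ x. ennreal k0 + ennreal (k1 * (norm x)\<^sup>2) \<partial>\<mu>)"
    by (intro nn_integral_mono inner)
  also have "\<dots> = ennreal k0 * emeasure \<mu> (space \<mu>) + ennreal (\<integral>x. k1 * (norm x)\<^sup>2 \<partial>\<mu>)"
  proof -
    have nm: "(\<lambda>x. (norm x)\<^sup>2) \<in> borel_measurable \<mu>" using M2 by auto
    have "(\<integral>\<^sup>+ x. ennreal k0 + ennreal (k1 * (norm x)\<^sup>2) \<partial>\<mu>) = (\<integral>\<^sup>+ x. ennreal k0 \<partial>\<mu>) + (\<integral>\<^sup>+ x. ennreal (k1 * (norm x)\<^sup>2) \<partial>\<mu>)"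
      using nm by (intro nn_integral_add) auto
    also have "(\<integral>\<^sup>+ x. ennreal (k1 * (norm x)\<^sup>2) \<partial>\<mu>) = ennreal (\<integral>x. k1 * (norm x)\<^sup>2 \<partial>\<mu>)"
      using k1 by (intro nn_integral_eq_integral integrable_mult_right M2) auto
    finally show ?thesis by simp
  qed
  also have "\<dots> = ennreal (k0 * measure \<mu> X + k1 * (D0 * M2sq \<mu>))"
    unfolding sX eX using k0 k1 mX M2s D0 M2sq_int[of \<mu>]
    by (simp add: ennreal_mult[symmetric] ennreal_plus[symmetric] D0_def del: ennreal_plus)
  also have "\<dots> \<le> ennreal (t * E / 2)"
  proof (intro ennreal_leI)
    have a1: "k0 * measure \<mu> X = t * (B2\<^sup>2 * (measure \<mu> X * M\<^sup>2))"
      unfolding k0_def s2sq B2sq by (simp add: algebra_simps)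
    have a2: "k1 * (D0 * M2sq \<mu>) \<le> t * (B2\<^sup>2 * (B1\<^sup>2 * M2sq \<mu>))"
    proof -
      have "k1 * (D0 * M2sq \<mu>) = (norm m2)\<^sup>2 * (2 * t * \<rho>1\<^sup>2 * D1 * D0 * M2sq \<mu>)"
        unfolding k1_def s1sq by (simp add: algebra_simps)
      also have "\<dots> \<le> B2\<^sup>2 * (2 * t * \<rho>1\<^sup>2 * D1 * D0 * M2sq \<mu>)"
        by (rule mult_right_mono[OF nm2]) (use t0 D0 D1 M2s in simp)
      also have "\<dots> = t * (B2\<^sup>2 * (B1\<^sup>2 * M2sq \<mu>))"
        unfolding B1sq by (simp add: algebra_simps)
      finally show ?thesis .
    qed
    have "k0 * measure \<mu> X + k1 * (D0 * M2sq \<mu>) \<le> t * E / 3"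
    proof -
      have "t * E / 3 = t * (B2\<^sup>2 * (measure \<mu> X * M\<^sup>2)) + t * (B2\<^sup>2 * (B1\<^sup>2 * M2sq \<mu>))"
        unfolding E_def by (simp add: algebra_simps)
      then show ?thesis using a1 a2 by linarith
    qed
    also have "\<dots> \<le> t * E / 2" using t0 E0 by (simp add: frac_le)
    finally show "k0 * measure \<mu> X + k1 * (D0 * M2sq \<mu>) \<le> t * E / 2" .
  qed
  finally show "(\<integral>\<^sup>+ x. \<integral>\<^sup>+ w. ennreal ((norm (fnet \<sigma> w x - fnet \<sigma> (m1, m2) x))\<^sup>2)
          \<partial>(GM m1 (sqrt t * \<rho>1) \<Otimes>\<^sub>M GM m2 (sqrt t * \<rho>2)) \<partial>\<mu>) \<le> ennreal (t * (3 * B2\<^sup>2 * (B1\<^sup>2 * M2sq \<mu> + measure \<mu> X * M\<^sup>2)) / 2)"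
    unfolding s1_def s2_def E_def .
qed

lemma ucase:
  fixes \<sigma> :: "real \<Rightarrow> real"
    and X :: "(real^'d0) set"
    and \<mu> :: "(real^'d0) measure"
    and P :: "'z measure"
    and fhat :: "'z \<Rightarrow> real^'d0 \<Rightarrow> real^'d2"
    and fP :: "real^'d0 \<Rightarrow> real^'d2"
    and \<rho>1 \<rho>2 \<beta> C :: real
    and n :: nat
    and m1 :: "real^'d1^'d0" and m2 :: "real^'d2^'d1"
  defines "\<pi> \<equiv> (gauss_prior \<rho>1 \<rho>2 :: ((real^'d1^'d0) \<times> (real^'d2^'d1)) measure)"
    and "B1 \<equiv> \<rho>1 * sqrt (2 * real CARD('d0) * real CARD('d1))"
    and "B2 \<equiv> \<rho>2 * sqrt (2 * real CARD('d1) * real CARD('d2))"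
    and "d \<equiv> real (CARD('d0) * CARD('d1) + CARD('d1) * CARD('d2))"
  assumes lip: "\<And>u u'. \<bar>\<sigma> u - \<sigma> u'\<bar> \<le> \<bar>u - u'\<bar>"
    and mu_sets: "sets \<mu> = sets (restrict_space borel X)"
    and mu_sf: "sigma_finite_measure \<mu>"
    and M2: "integrable \<mu> (\<lambda>x. (norm x)\<^sup>2)"
    and rho: "\<rho>1 > 0" "\<rho>2 > 0"
    and beta: "\<beta> > 0" and Cpos: "C > 0" and n: "n > 0"
    and fP: "in_L2 \<mu> fP"
    and pb: "pac_bayes_bound P \<mu> X \<sigma> fhat fP \<pi> \<beta> n C"
    and z: "\<sigma> 0 = 0"
    and w1: "norm m1 \<le> B1" and w2: "norm m2 \<le> B2"
  shows "risk P \<mu> fhat fP < \<infinity> \<and>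
    sqrt (enn2real (risk P \<mu> fhat fP) / C)
      \<le> L2norm \<mu> (\<lambda>x. fnet \<sigma> (m1, m2) x - fP x)
        + sqrt (\<beta> * d / real n * ln (3 + real n * (3 * B1\<^sup>2 * B2\<^sup>2 * (M2sq \<mu> + M2barsq \<mu> / real CARD('d1))) / (d * \<beta>)))"
  unfolding d_def \<pi>_def
proof (rule core[OF lip mu_sets mu_sf rho beta Cpos n fP])
  show "pac_bayes_bound P \<mu> X \<sigma> fhat fP (gauss_prior \<rho>1 \<rho>2 :: ((real^'d1^'d0) \<times> (real^'d2^'d1)) measure) \<beta> n C" using pb unfolding \<pi>_def .
  define D0 where "D0 = real CARD('d0)"
  define D1 where "D1 = real CARD('d1)"
  define D2 where "D2 = real CARD('d2)"
  have D0: "1 \<le> D0" and D1: "1 \<le> D1" and D2: "1 \<le> D2" unfolding D0_def D1_def D2_def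
    by (simp_all add: Suc_leI)
  have B1sq: "B1\<^sup>2 = 2 * \<rho>1\<^sup>2 * (D0 * D1)" unfolding B1_def D0_def D1_def
    by (simp add: power_mult_distrib)
  have B2sq: "B2\<^sup>2 = 2 * \<rho>2\<^sup>2 * (D1 * D2)" unfolding B2_def D1_def D2_def
    by (simp add: power_mult_distrib)
  have B10: "0 \<le> B1" and B20: "0 \<le> B2" unfolding B1_def B2_def using rho by auto
  have nm1: "(norm m1)\<^sup>2 \<le> B1\<^sup>2" using w1 by (simp add: power_mono)
  have nm2: "(norm m2)\<^sup>2 \<le> B2\<^sup>2" using w2 by (simp add: power_mono)
  show "(norm m1)\<^sup>2 \<le> 2 * \<rho>1\<^sup>2 * real (CARD('d0) * CARD('d1))"
    using nm1 B1sq unfolding D0_def D1_def by simp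
  show "(norm m2)\<^sup>2 \<le> 2 * \<rho>2\<^sup>2 * real (CARD('d1) * CARD('d2))"
    using nm2 B2sq unfolding D1_def D2_def by simp
  have M2s: "0 \<le> M2sq \<mu>" by (rule M2sq_nonneg)
  have Mb: "0 \<le> M2barsq \<mu>" by (rule M2barsq_nonneg)
  define E where "E = 3 * B1\<^sup>2 * B2\<^sup>2 * (M2sq \<mu> + M2barsq \<mu> / real CARD('d1))"
  have E0: "0 \<le> E" unfolding E_def using M2s Mb by simp
  show "0 \<le> 3 * B1\<^sup>2 * B2\<^sup>2 * (M2sq \<mu> + M2barsq \<mu> / real CARD('d1))" using E0 unfolding E_def .
  have c: "continuous_on UNIV \<sigma>" by (rule lip_cont[OF lip])
  have usq: "(norm (\<chi> j::'d1. \<sigma> (v $ j)))\<^sup>2 \<le> (norm v)\<^sup>2" for v :: "real^'d1"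
    by (rule sig_zero_vec[OF lip z])
  have nmx: "(\<lambda>x. (norm x)\<^sup>2) \<in> borel_measurable \<mu>" using M2 by auto
  have fnm: "fnet \<sigma> w \<in> borel_measurable \<mu>" for w
    by (rule meas_mu[OF mu_sets borel_measurable_continuous_onI[OF fnet_x_cont[OF c]]])
  have fPm: "fP \<in> borel_measurable \<mu>" using fP unfolding in_L2_def by simp
  have "L2sq \<mu> (fnet \<sigma> (m1, m2)) \<le> (\<integral>\<^sup>+ x. ennreal ((norm m1)\<^sup>2 * (norm m2)\<^sup>2 * (norm x)\<^sup>2) \<partial>\<mu>)"
    unfolding L2sq_def
  proof (intro nn_integral_mono ennreal_leI)
    fix x :: "real^'d0"
    have "(norm (x v* m1))\<^sup>2 \<le> (norm x * norm m1)\<^sup>2" by (rule power_mono[OF norm_vm]) simp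
    then have a: "(norm (x v* m1))\<^sup>2 \<le> (norm m1)\<^sup>2 * (norm x)\<^sup>2"
      by (simp add: power_mult_distrib mult.commute)
    have "(norm (\<chi> j. \<sigma> ((x v* m1) $ j)))\<^sup>2 \<le> (norm m1)\<^sup>2 * (norm x)\<^sup>2"
      by (rule order_trans[OF usq a])
    then have b: "(norm (\<chi> j. \<sigma> ((x v* m1) $ j)))\<^sup>2 * (norm m2)\<^sup>2 \<le> (norm m1)\<^sup>2 * (norm x)\<^sup>2 * (norm m2)\<^sup>2"
      by (rule mult_right_mono) simp
    have e: "(norm m1)\<^sup>2 * (norm x)\<^sup>2 * (norm m2)\<^sup>2 = (norm m1)\<^sup>2 * (norm m2)\<^sup>2 * (norm x)\<^sup>2" by (simp add: mult_ac)
    show "(norm (fnet \<sigma> (m1, m2) x))\<^sup>2 \<le> (norm m1)\<^sup>2 * (norm m2)\<^sup>2 * (norm x)\<^sup>2"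
      by (rule order_trans[OF order_trans[OF fnet_sq_le b] eq_refl[OF e]])
  qed
  also have "\<dots> = ennreal (\<integral>x. (norm m1)\<^sup>2 * (norm m2)\<^sup>2 * (norm x)\<^sup>2 \<partial>\<mu>)"
    by (intro nn_integral_eq_integral integrable_mult_right M2) auto
  also have "\<dots> < \<infinity>" by simp
  finally have "L2sq \<mu> (fnet \<sigma> (m1, m2)) < \<infinity>" .
  then show "L2sq \<mu> (\<lambda>x. fnet \<sigma> (m1, m2) x - fP x) < \<infinity>"
    by (intro L2sq_diff_fin fnm fPm) (use fP in \<open>auto simp: in_L2_def\<close>)
  fix t :: real assume t0: "0 < t" and t1: "t \<le> 1"
  define s1 where "s1 = sqrt t * \<rho>1"
  define s2 where "s2 = sqrt t * \<rho>2"
  have s1: "0 < s1" and s2: "0 < s2" unfolding s1_def s2_def using t0 rho by auto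
  have s1sq: "s1\<^sup>2 = t * \<rho>1\<^sup>2" and s2sq: "s2\<^sup>2 = t * \<rho>2\<^sup>2"
    unfolding s1_def s2_def using t0 by (simp_all add: power_mult_distrib)
  define g where "g x = 2 * s2\<^sup>2 * D2 * ((norm (x v* m1))\<^sup>2 + s1\<^sup>2 * D1 * (norm x)\<^sup>2) + 2 * (norm m2)\<^sup>2 * (s1\<^sup>2 * D1 * (norm x)\<^sup>2)" for x :: "real^'d0"
  have inner: "(\<integral>\<^sup>+ w. ennreal ((norm (fnet \<sigma> w x - fnet \<sigma> (m1, m2) x))\<^sup>2) \<partial>(GM m1 s1 \<Otimes>\<^sub>M GM m2 s2))
      \<le> ennreal (g x)" for x
  proof -
    have "(\<integral>\<^sup>+ w1. ennreal ((norm (\<chi> j. \<sigma> ((x v* w1) $ j)))\<^sup>2) \<partial>GM m1 s1) \<le> (\<integral>\<^sup>+ w1. ennreal ((norm (x v* w1))\<^sup>2) \<partial>GM m1 s1)"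
      by (intro nn_integral_mono ennreal_leI usq)
    also have "\<dots> = ennreal (\<integral>w1. (norm (x v* w1))\<^sup>2 \<partial>GM m1 s1)"
      by (intro nn_integral_eq_integral GM_vm_sq(1)[OF s1]) auto
    also have "\<dots> = ennreal ((norm (x v* m1))\<^sup>2 + s1\<^sup>2 * D1 * (norm x)\<^sup>2)"
      unfolding D1_def by (simp add: GM_vm_sq(2)[OF s1])
    finally have u: "(\<integral>\<^sup>+ w1. ennreal ((norm (\<chi> j. \<sigma> ((x v* w1) $ j)))\<^sup>2) \<partial>GM m1 s1) \<le> ennreal ((norm (x v* m1))\<^sup>2 + s1\<^sup>2 * D1 * (norm x)\<^sup>2)" .
    have "(\<integral>\<^sup>+ w. ennreal ((norm (fnet \<sigma> w x - fnet \<sigma> (m1, m2) x))\<^sup>2) \<partial>(GM m1 s1 \<Otimes>\<^sub>M GM m2 s2))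
      \<le> ennreal (2 * s2\<^sup>2 * D2) * (\<integral>\<^sup>+ w1. ennreal ((norm (\<chi> j. \<sigma> ((x v* w1) $ j)))\<^sup>2) \<partial>GM m1 s1)
        + ennreal (2 * (norm m2)\<^sup>2 * (s1\<^sup>2 * D1 * (norm x)\<^sup>2))"
      unfolding D1_def D2_def by (rule exp_pair[OF lip s1 s2])
    also have "\<dots> \<le> ennreal (2 * s2\<^sup>2 * D2) * ennreal ((norm (x v* m1))\<^sup>2 + s1\<^sup>2 * D1 * (norm x)\<^sup>2) + ennreal (2 * (norm m2)\<^sup>2 * (s1\<^sup>2 * D1 * (norm x)\<^sup>2))"
      by (intro add_right_mono mult_left_mono u) simp
    also have "\<dots> = ennreal (g x)"
      unfolding g_def using D1 D2
      by (simp add: ennreal_mult[symmetric] ennreal_plus[symmetric] del: ennreal_plus)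
    finally show ?thesis .
  qed
  have ig: "integrable \<mu> g"
    unfolding g_def
    by (intro Bochner_Integration.integrable_add integrable_mult_right M2 M2bar_bound(1)[OF mu_sets M2])
  have "(\<integral>\<^sup>+ x. \<integral>\<^sup>+ w. ennreal ((norm (fnet \<sigma> w x - fnet \<sigma> (m1, m2) x))\<^sup>2) \<partial>(GM m1 s1 \<Otimes>\<^sub>M GM m2 s2) \<partial>\<mu>)
      \<le> (\<integral>\<^sup>+ x. ennreal (g x) \<partial>\<mu>)"
    by (intro nn_integral_mono inner)
  also have "\<dots> = ennreal (\<integral>x. g x \<partial>\<mu>)"
    by (intro nn_integral_eq_integral ig) (use D1 D2 in \<open>auto simp: g_def\<close>)
  also have "\<dots> \<le> ennreal (t * E / 2)"
  proof (intro ennreal_leI)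
    define I1 where "I1 = (\<integral>x. (norm (x v* m1))\<^sup>2 \<partial>\<mu>)"
    define I0 where "I0 = (\<integral>x. (norm x)\<^sup>2 \<partial>\<mu>)"
    have I0: "I0 = D0 * M2sq \<mu>" unfolding I0_def D0_def by (rule M2sq_int)
    have I1: "I1 \<le> M2barsq \<mu> * B1\<^sup>2"
    proof -
      have "I1 \<le> M2barsq \<mu> * (norm m1)\<^sup>2" unfolding I1_def by (rule M2bar_bound(2)[OF mu_sets M2])
      also have "\<dots> \<le> M2barsq \<mu> * B1\<^sup>2" by (rule mult_left_mono[OF nm1 Mb])
      finally show ?thesis .
    qed
    have gi: "(\<integral>x. g x \<partial>\<mu>) = 2 * s2\<^sup>2 * D2 * (I1 + s1\<^sup>2 * D1 * I0) + 2 * (norm m2)\<^sup>2 * (s1\<^sup>2 * D1 * I0)"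
      unfolding g_def I1_def I0_def
      by (subst Bochner_Integration.integral_add; (intro integrable_mult_right M2 M2bar_bound(1)[OF mu_sets M2] Bochner_Integration.integrable_add)?)
         (simp_all add: M2 M2bar_bound(1)[OF mu_sets M2])
    define Q where "Q = t * B1\<^sup>2 * B2\<^sup>2"
    have Q0: "0 \<le> Q" unfolding Q_def using t0 by simp
    have t1': "2 * s2\<^sup>2 * D2 * I1 \<le> Q * M2barsq \<mu> / D1"
    proof -
      have "2 * s2\<^sup>2 * D2 * I1 \<le> 2 * s2\<^sup>2 * D2 * (M2barsq \<mu> * B1\<^sup>2)"
        by (rule mult_left_mono[OF I1]) (use D2 in simp)
      also have "\<dots> = Q * M2barsq \<mu> / D1"
        unfolding Q_def s2sq B2sq using D1 by (simp add: field_simps)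
      finally show ?thesis .
    qed
    have t2': "2 * s2\<^sup>2 * D2 * (s1\<^sup>2 * D1 * I0) \<le> Q * M2sq \<mu> / 2"
    proof -
      have "2 * s2\<^sup>2 * D2 * (s1\<^sup>2 * D1 * I0) = t * (Q * M2sq \<mu> / (2 * D1))"
        unfolding Q_def s1sq s2sq I0 B1sq B2sq using D1 by (simp add: field_simps power2_eq_square)
      also have "\<dots> \<le> 1 * (Q * M2sq \<mu> / (2 * D1))"
        by (rule mult_right_mono[OF t1]) (use Q0 M2s D1 in simp)
      also have "\<dots> \<le> Q * M2sq \<mu> / 2"
      proof -
        have x0: "0 \<le> Q * M2sq \<mu>" using Q0 M2s by simp
        have "Q * M2sq \<mu> * 1 \<le> Q * M2sq \<mu> * D1" by (rule mult_left_mono[OF D1 x0])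
        then show ?thesis using D1 by (simp add: divide_le_eq)
      qed
      finally show ?thesis .
    qed
    have t3': "2 * (norm m2)\<^sup>2 * (s1\<^sup>2 * D1 * I0) \<le> Q * M2sq \<mu>"
    proof -
      have "2 * (norm m2)\<^sup>2 * (s1\<^sup>2 * D1 * I0) = (norm m2)\<^sup>2 * (2 * t * \<rho>1\<^sup>2 * D1 * D0 * M2sq \<mu>)"
        unfolding s1sq I0 by (simp add: algebra_simps)
      also have "\<dots> \<le> B2\<^sup>2 * (2 * t * \<rho>1\<^sup>2 * D1 * D0 * M2sq \<mu>)"
        by (rule mult_right_mono[OF nm2]) (use t0 D0 D1 M2s in simp)
      also have "\<dots> = Q * M2sq \<mu>"
        unfolding Q_def B1sq by (simp add: algebra_simps)
      finally show ?thesis .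
    qed
    have Et: "t * E / 2 = 3 / 2 * (Q * M2sq \<mu>) + 3 / 2 * (Q * M2barsq \<mu> / D1)"
      unfolding E_def Q_def D1_def by (simp add: field_simps)
    have "0 \<le> Q * M2barsq \<mu> / D1" using Q0 Mb D1 by simp
    moreover have "0 \<le> Q * M2sq \<mu>" using Q0 M2s by simp
    ultimately show "(\<integral>x. g x \<partial>\<mu>) \<le> t * E / 2"
      unfolding gi Et using t1' t2' t3' by (simp add: algebra_simps)
  qed
  finally show "(\<integral>\<^sup>+ x. \<integral>\<^sup>+ w. ennreal ((norm (fnet \<sigma> w x - fnet \<sigma> (m1, m2) x))\<^sup>2)
          \<partial>(GM m1 (sqrt t * \<rho>1) \<Otimes>\<^sub>M GM m2 (sqrt t * \<rho>2)) \<partial>\<mu>) \<le> ennreal (t * (3 * B1\<^sup>2 * B2\<^sup>2 * (M2sq \<mu> + M2barsq \<mu> / real CARD('d1))) / 2)"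
    unfolding s1_def s2_def E_def .
qed

theorem theorem1:
  fixes \<sigma> :: "real \<Rightarrow> real"
    and X :: "(real^'d0) set"
    and \<mu> :: "(real^'d0) measure"
    and P :: "'z measure"
    and fhat :: "'z \<Rightarrow> real^'d0 \<Rightarrow> real^'d2"
    and fP :: "real^'d0 \<Rightarrow> real^'d2"
    and \<rho>1 \<rho>2 \<beta> C :: real
    and n :: nat
  defines "\<pi> \<equiv> (gauss_prior \<rho>1 \<rho>2 :: ((real^'d1^'d0) \<times> (real^'d2^'d1)) measure)"
    and "B1 \<equiv> \<rho>1 * sqrt (2 * real CARD('d0) * real CARD('d1))"
    and "B2 \<equiv> \<rho>2 * sqrt (2 * real CARD('d1) * real CARD('d2))"
    and "d \<equiv> real (CARD('d0) * CARD('d1) + CARD('d1) * CARD('d2))"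
  assumes lip: "\<And>u u'. \<bar>\<sigma> u - \<sigma> u'\<bar> \<le> \<bar>u - u'\<bar>"
    and X: "X \<in> sets borel"
    and mu_sets: "sets \<mu> = sets (restrict_space borel X)"
    and mu_sf: "sigma_finite_measure \<mu>"
    and M2: "integrable \<mu> (\<lambda>x. (norm x)\<^sup>2)"
    and rho: "\<rho>1 > 0" "\<rho>2 > 0"
    and beta: "\<beta> > 0" and Cpos: "C > 0" and n: "n > 0"
    and P: "prob_space P"
    and fhat_meas: "(\<lambda>(z, x). fhat z x) \<in> borel_measurable (P \<Otimes>\<^sub>M \<mu>)"
    and fhat_L2: "\<And>z. z \<in> space P \<Longrightarrow> in_L2 \<mu> (fhat z)"
    and fP: "in_L2 \<mu> fP"
    and pb: "pac_bayes_bound P \<mu> X \<sigma> fhat fP \<pi> \<beta> n C"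
  shows
    "(\<forall>M\<sigma>. (\<forall>u. \<bar>\<sigma> u\<bar> \<le> M\<sigma>) \<longrightarrow> emeasure \<mu> X < \<infinity> \<longrightarrow>
       (let E = 3 * B2\<^sup>2 * (B1\<^sup>2 * M2sq \<mu> + measure \<mu> X * M\<sigma>\<^sup>2) in
        risk P \<mu> fhat fP < \<infinity> \<and>
        sqrt (enn2real (risk P \<mu> fhat fP) / C)
          \<le> (INF w \<in> {w :: (real^'d1^'d0) \<times> (real^'d2^'d1). norm (fst w) \<le> B1 \<and> norm (snd w) \<le> B2}.
                L2norm \<mu> (\<lambda>x. fnet \<sigma> w x - fP x))
            + sqrt (\<beta> * d / real n * ln (3 + real n * E / (d * \<beta>)))))
   \<and> ((\<not> bounded (range \<sigma>) \<and> \<sigma> 0 = 0) \<longrightarrow>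
       (let E = 3 * B1\<^sup>2 * B2\<^sup>2 * (M2sq \<mu> + M2barsq \<mu> / real CARD('d1)) in
        risk P \<mu> fhat fP < \<infinity> \<and>
        sqrt (enn2real (risk P \<mu> fhat fP) / C)
          \<le> (INF w \<in> {w :: (real^'d1^'d0) \<times> (real^'d2^'d1). norm (fst w) \<le> B1 \<and> norm (snd w) \<le> B2}.
                L2norm \<mu> (\<lambda>x. fnet \<sigma> w x - fP x))
            + sqrt (\<beta> * d / real n * ln (3 + real n * E / (d * \<beta>)))))"
proof -
  have inf_assemble: "r < \<infinity> \<and> s \<le> (INF w \<in> S. f w) + c"
    if ne: "S \<noteq> {}" and f0: "\<And>w. w \<in> S \<Longrightarrow> 0 \<le> f w"
      and h: "\<And>w. w \<in> S \<Longrightarrow> r < \<infinity> \<and> s \<le> f w + c"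
    for r :: ennreal and s c :: real and S :: "'w set" and f :: "'w \<Rightarrow> real"
  proof
    obtain w0 where "w0 \<in> S" using ne by auto
    then show "r < \<infinity>" using h by blast
    have "s - c \<le> (INF w \<in> S. f w)"
      by (rule cINF_greatest[OF ne]) (use h in force)
    then show "s \<le> (INF w \<in> S. f w) + c" by simp
  qed
  define S where "S = {w :: (real^'d1^'d0) \<times> (real^'d2^'d1). norm (fst w) \<le> B1 \<and> norm (snd w) \<le> B2}"
  have B10: "0 \<le> B1" and B20: "0 \<le> B2" unfolding B1_def B2_def using rho by auto
  have "(0, 0) \<in> S" unfolding S_def using B10 B20 by simp
  then have Sne: "S \<noteq> {}" by auto
  have L0: "0 \<le> L2norm \<mu> (\<lambda>x. fnet \<sigma> w x - fP x)" for w :: "(real^'d1^'d0) \<times> (real^'d2^'d1)"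
    unfolding L2norm_def by simp
  show ?thesis
  proof (intro conjI allI impI)
    fix M :: real
    assume bd: "\<forall>u. \<bar>\<sigma> u\<bar> \<le> M" and finX: "emeasure \<mu> X < \<infinity>"
    show "let E = 3 * B2\<^sup>2 * (B1\<^sup>2 * M2sq \<mu> + measure \<mu> X * M\<^sup>2) in
        risk P \<mu> fhat fP < \<infinity> \<and>
        sqrt (enn2real (risk P \<mu> fhat fP) / C)
          \<le> (INF w \<in> {w :: (real^'d1^'d0) \<times> (real^'d2^'d1). norm (fst w) \<le> B1 \<and> norm (snd w) \<le> B2}.
                L2norm \<mu> (\<lambda>x. fnet \<sigma> w x - fP x))
            + sqrt (\<beta> * d / real n * ln (3 + real n * E / (d * \<beta>)))"
      unfolding Let_def S_def[symmetric]
    proof (rule inf_assemble[OF Sne L0])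
      fix w assume w: "w \<in> S"
      obtain m1 m2 where mw: "w = (m1, m2)" by (cases w)
      have w1: "norm m1 \<le> B1" and w2: "norm m2 \<le> B2" using w unfolding S_def mw by auto
      show "risk P \<mu> fhat fP < \<infinity> \<and>
        sqrt (enn2real (risk P \<mu> fhat fP) / C)
          \<le> L2norm \<mu> (\<lambda>x. fnet \<sigma> w x - fP x)
            + sqrt (\<beta> * d / real n * ln (3 + real n * (3 * B2\<^sup>2 * (B1\<^sup>2 * M2sq \<mu> + measure \<mu> X * M\<^sup>2)) / (d * \<beta>)))"
        unfolding mw d_def B1_def B2_def
        by (rule bcase[OF lip mu_sets mu_sf M2 rho beta Cpos n fP pb[unfolded \<pi>_def] _ finX])
           (use bd w1 w2 in \<open>auto simp: B1_def B2_def\<close>)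
    qed
  next
    assume ub: "\<not> bounded (range \<sigma>) \<and> \<sigma> 0 = 0"
    then have z: "\<sigma> 0 = 0" by simp
    show "let E = 3 * B1\<^sup>2 * B2\<^sup>2 * (M2sq \<mu> + M2barsq \<mu> / real CARD('d1)) in
        risk P \<mu> fhat fP < \<infinity> \<and>
        sqrt (enn2real (risk P \<mu> fhat fP) / C)
          \<le> (INF w \<in> {w :: (real^'d1^'d0) \<times> (real^'d2^'d1). norm (fst w) \<le> B1 \<and> norm (snd w) \<le> B2}.
                L2norm \<mu> (\<lambda>x. fnet \<sigma> w x - fP x))
            + sqrt (\<beta> * d / real n * ln (3 + real n * E / (d * \<beta>)))"
      unfolding Let_def S_def[symmetric]
    proof (rule inf_assemble[OF Sne L0])
      fix w assume w: "w \<in> S"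
      obtain m1 m2 where mw: "w = (m1, m2)" by (cases w)
      have w1: "norm m1 \<le> B1" and w2: "norm m2 \<le> B2" using w unfolding S_def mw by auto
      show "risk P \<mu> fhat fP < \<infinity> \<and>
        sqrt (enn2real (risk P \<mu> fhat fP) / C)
          \<le> L2norm \<mu> (\<lambda>x. fnet \<sigma> w x - fP x)
            + sqrt (\<beta> * d / real n * ln (3 + real n * (3 * B1\<^sup>2 * B2\<^sup>2 * (M2sq \<mu> + M2barsq \<mu> / real CARD('d1))) / (d * \<beta>)))"
        unfolding mw d_def B1_def B2_def
        by (rule ucase[OF lip mu_sets mu_sf M2 rho beta Cpos n fP pb[unfolded \<pi>_def] z])
           (use w1 w2 in \<open>auto simp: B1_def B2_def\<close>)
    qed
  qed
qed

end
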